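(* Let $E$ be a directed graph, let $V\subset E^0$, let $R$ be a commutative ring with identity, and let $\{p_v,s_e,s_{e^*}\}$ be the universal generating Leavitt $E$-family in $L_R(E)$. Let $M=\operatorname{span}_R\{s_\mu s_{\nu^*}:\mu,\nu\in E^*,\ r(\mu)\in V\}$ and $M^*=\operatorname{span}_R\{s_\mu s_{\nu^*}:\mu,\nu\in E^*,\ r(\nu)\in V\}$, and let $M^*M$ be the $R$-span of all products $nm$ with $n\in M^*$, $m\in M$. Then $M^*M=L_R(E)$ (i.e. $V$ is full) if and only if $\Sigma H(V)=E^0$.
   Context: A directed graph $E=(E^0,E^1,r,s)$ has countable vertex and edge sets with range and source maps $r,s:E^1\to E^0$. A vertex $v$ is singular if $r^{-1}(v)$ is empty or infinite. Finite paths $\mu=\mu_1\cdots\mu_n$ satisfy $s(\mu_i)=r(\mu_{i+1})$, with $r(\mu)=r(\mu_1)$, $s(\mu)=s(\mu_n)$; vertices are paths of length $0$; $E^*$ is the set of finite paths. $L_R(E)$ is the universal $R$-algebra generated by mutually orthogonal idempotents $p_v$ ($v\in E^0$) and elements $s_e,s_{e^*}$ ($e\in E^1$) subject to $p_{r(e)}s_e=s_e=s_ep_{s(e)}$, $p_{s(e)}s_{e^*}=s_{e^*}=s_{e^*}p_{r(e)}$, $s_{e^*}s_f=\delta_{e,f}p_{s(e)}$, and $p_v=\sum_{r(e)=v}s_es_{e^*}$ for non-singular $v$; $s_\mu=s_{\mu_1}\cdots s_{\mu_n}$, $s_{\mu^*}=s_{\mu_n^*}\cdots s_{\mu_1^*}$,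 $s_v=s_{v^*}=p_v$. Write $v\le w$ if there is $\mu\in E^*$ with $r(\mu)=v$, $s(\mu)=w$. A set $H\subset E^0$ is hereditary if $v\in H$, $v\le w$ imply $w\in H$; it is saturated if whenever $0<|r^{-1}(v)|<\infty$ and $s(r^{-1}(v))\subset H$ then $v\in H$. $\Sigma H(V)$ denotes the smallest saturated hereditary subset of $E^0$ containing $V$. *)

theory Defs
  imports "HOL-Library.Poly_Mapping" "HOL-Library.Countable_Set"
begin

datatype ('v,'e) gen = P 'v | S 'e | SS 'e

text \<open>Elements of the free algebra: finitely supported R-valued functions on words
  (lists of generators); multiplication is concatenation of words.\<close>

definition fmul :: "('g list \<Rightarrow>\<^sub>0 'r::comm_ring_1) \<Rightarrow> ('g list \<Rightarrow>\<^sub>0 'r) \<Rightarrow> ('g list \<Rightarrow>\<^sub>0 'r)" where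
  "fmul p q = (\<Sum>a\<in>Poly_Mapping.keys p. \<Sum>b\<in>Poly_Mapping.keys q. Poly_Mapping.single (a @ b) (Poly_Mapping.lookup p a * Poly_Mapping.lookup q b))"

definition fsmult :: "'r::comm_ring_1 \<Rightarrow> ('g list \<Rightarrow>\<^sub>0 'r) \<Rightarrow> ('g list \<Rightarrow>\<^sub>0 'r)" where
  "fsmult c p = fmul (Poly_Mapping.single [] c) p"

definition mon :: "'g list \<Rightarrow> ('g list \<Rightarrow>\<^sub>0 'r::comm_ring_1)" where
  "mon w = Poly_Mapping.single w 1"

definition pv :: "'v \<Rightarrow> (('v,'e) gen list \<Rightarrow>\<^sub>0 'r::comm_ring_1)" where
  "pv v = mon [P v]"
definition se :: "'e \<Rightarrow> (('v,'e) gen list \<Rightarrow>\<^sub>0 'r::comm_ring_1)" where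
  "se e = mon [S e]"
definition ses :: "'e \<Rightarrow> (('v,'e) gen list \<Rightarrow>\<^sub>0 'r::comm_ring_1)" where
  "ses e = mon [SS e]"

definition gen_ok :: "'v set \<Rightarrow> 'e set \<Rightarrow> ('v,'e) gen \<Rightarrow> bool" where
  "gen_ok E0 E1 g = (case g of P v \<Rightarrow> v \<in> E0 | S e \<Rightarrow> e \<in> E1 | SS e \<Rightarrow> e \<in> E1)"

text \<open>The (non-unital) free algebra: spanned by nonempty words in the generators of E.\<close>
definition free_alg :: "'v set \<Rightarrow> 'e set \<Rightarrow> (('v,'e) gen list \<Rightarrow>\<^sub>0 'r::comm_ring_1) set" where
  "free_alg E0 E1 = {x. \<forall>w\<in>Poly_Mapping.keys x. w \<noteq> [] \<and> (\<forall>g\<in>set w. gen_ok E0 E1 g)}"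

text \<open>Two-sided ideal generated by the Leavitt E-family relations; L_R(E) is
  free_alg modulo this ideal.\<close>
inductive_set lp_ideal :: "'v set \<Rightarrow> 'e set \<Rightarrow> ('e \<Rightarrow> 'v) \<Rightarrow> ('e \<Rightarrow> 'v)
    \<Rightarrow> (('v,'e) gen list \<Rightarrow>\<^sub>0 'r::comm_ring_1) set"
  for E0 :: "'v set" and E1 :: "'e set" and r :: "'e \<Rightarrow> 'v" and s :: "'e \<Rightarrow> 'v" where
  idem: "v \<in> E0 \<Longrightarrow> fmul (pv v) (pv v) - pv v \<in> lp_ideal E0 E1 r s"
| orth: "v \<in> E0 \<Longrightarrow> w \<in> E0 \<Longrightarrow> v \<noteq> w \<Longrightarrow> fmul (pv v) (pv w) \<in> lp_ideal E0 E1 r s"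
| rs: "e \<in> E1 \<Longrightarrow> fmul (pv (r e)) (se e) - se e \<in> lp_ideal E0 E1 r s"
| sr: "e \<in> E1 \<Longrightarrow> fmul (se e) (pv (s e)) - se e \<in> lp_ideal E0 E1 r s"
| rss: "e \<in> E1 \<Longrightarrow> fmul (pv (s e)) (ses e) - ses e \<in> lp_ideal E0 E1 r s"
| ssr: "e \<in> E1 \<Longrightarrow> fmul (ses e) (pv (r e)) - ses e \<in> lp_ideal E0 E1 r s"
| ck1: "e \<in> E1 \<Longrightarrow> f \<in> E1 \<Longrightarrow>
        fmul (ses e) (se f) - (if e = f then pv (s e) else 0) \<in> lp_ideal E0 E1 r s"
| ck2: "v \<in> E0 \<Longrightarrow> {e\<in>E1. r e = v} \<noteq> {} \<Longrightarrow> finite {e\<in>E1. r e = v} \<Longrightarrow>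
        pv v - (\<Sum>e\<in>{e\<in>E1. r e = v}. fmul (se e) (ses e)) \<in> lp_ideal E0 E1 r s"
| zero: "0 \<in> lp_ideal E0 E1 r s"
| add: "a \<in> lp_ideal E0 E1 r s \<Longrightarrow> b \<in> lp_ideal E0 E1 r s \<Longrightarrow> a + b \<in> lp_ideal E0 E1 r s"
| left: "a \<in> lp_ideal E0 E1 r s \<Longrightarrow> fmul x a \<in> lp_ideal E0 E1 r s"
| right: "a \<in> lp_ideal E0 E1 r s \<Longrightarrow> fmul a x \<in> lp_ideal E0 E1 r s"

inductive_set rspan :: "('g list \<Rightarrow>\<^sub>0 'r::comm_ring_1) set \<Rightarrow> ('g list \<Rightarrow>\<^sub>0 'r) set"
  for X :: "('g list \<Rightarrow>\<^sub>0 'r::comm_ring_1) set" where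
  zero: "0 \<in> rspan X"
| base: "x \<in> X \<Longrightarrow> x \<in> rspan X"
| add: "a \<in> rspan X \<Longrightarrow> b \<in> rspan X \<Longrightarrow> a + b \<in> rspan X"
| smult: "a \<in> rspan X \<Longrightarrow> fsmult c a \<in> rspan X"

text \<open>A finite path is either a vertex (Inl v, length 0) or a nonempty list of edges
  mu_1 ... mu_n with s(mu_i) = r(mu_(i+1)).\<close>
type_synonym ('v,'e) fpath = "'v + 'e list"

fun path_ok :: "'v set \<Rightarrow> 'e set \<Rightarrow> ('e \<Rightarrow> 'v) \<Rightarrow> ('e \<Rightarrow> 'v) \<Rightarrow> ('v,'e) fpath \<Rightarrow> bool" where
  "path_ok E0 E1 r s (Inl v) = (v \<in> E0)"
| "path_ok E0 E1 r s (Inr es) = (es \<noteq> [] \<and> set es \<subseteq> E1 \<and>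
      (\<forall>i. Suc i < length es \<longrightarrow> s (es ! i) = r (es ! Suc i)))"

fun prange :: "('e \<Rightarrow> 'v) \<Rightarrow> ('v,'e) fpath \<Rightarrow> 'v" where
  "prange r (Inl v) = v"
| "prange r (Inr es) = r (hd es)"

fun psource :: "('e \<Rightarrow> 'v) \<Rightarrow> ('v,'e) fpath \<Rightarrow> 'v" where
  "psource s (Inl v) = v"
| "psource s (Inr es) = s (last es)"

fun spath :: "('v,'e) fpath \<Rightarrow> (('v,'e) gen list \<Rightarrow>\<^sub>0 'r::comm_ring_1)" where
  "spath (Inl v) = pv v"
| "spath (Inr es) = mon (map S es)"

fun spath_star :: "('v,'e) fpath \<Rightarrow> (('v,'e) gen list \<Rightarrow>\<^sub>0 'r::comm_ring_1)" where
  "spath_star (Inl v) = pv v"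
| "spath_star (Inr es) = mon (rev (map SS es))"

definition Mspace :: "'v set \<Rightarrow> 'e set \<Rightarrow> ('e \<Rightarrow> 'v) \<Rightarrow> ('e \<Rightarrow> 'v) \<Rightarrow> 'v set
    \<Rightarrow> (('v,'e) gen list \<Rightarrow>\<^sub>0 'r::comm_ring_1) set" where
  "Mspace E0 E1 r s V = rspan {fmul (spath \<mu>) (spath_star \<nu>) | \<mu> \<nu>.
      path_ok E0 E1 r s \<mu> \<and> path_ok E0 E1 r s \<nu> \<and> prange r \<mu> \<in> V}"

definition Mstar_space :: "'v set \<Rightarrow> 'e set \<Rightarrow> ('e \<Rightarrow> 'v) \<Rightarrow> ('e \<Rightarrow> 'v) \<Rightarrow> 'v set
    \<Rightarrow> (('v,'e) gen list \<Rightarrow>\<^sub>0 'r::comm_ring_1) set" where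
  "Mstar_space E0 E1 r s V = rspan {fmul (spath \<mu>) (spath_star \<nu>) | \<mu> \<nu>.
      path_ok E0 E1 r s \<mu> \<and> path_ok E0 E1 r s \<nu> \<and> prange r \<nu> \<in> V}"

definition MstarM :: "'v set \<Rightarrow> 'e set \<Rightarrow> ('e \<Rightarrow> 'v) \<Rightarrow> ('e \<Rightarrow> 'v) \<Rightarrow> 'v set
    \<Rightarrow> (('v,'e) gen list \<Rightarrow>\<^sub>0 'r::comm_ring_1) set" where
  "MstarM E0 E1 r s V = rspan {fmul n m | n m.
      n \<in> Mstar_space E0 E1 r s V \<and> m \<in> Mspace E0 E1 r s V}"

text \<open>M*M = L_R(E), read through the quotient map free_alg \<rightarrow> L_R(E):
  every element of the free algebra is congruent modulo the Leavitt ideal to an element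
  of (the lift of) M*M.\<close>
definition is_full :: "'r::comm_ring_1 itself \<Rightarrow> 'v set \<Rightarrow> 'e set \<Rightarrow> ('e \<Rightarrow> 'v) \<Rightarrow> ('e \<Rightarrow> 'v)
    \<Rightarrow> 'v set \<Rightarrow> bool" where
  "is_full (_ :: 'r itself) E0 E1 r s V \<longleftrightarrow>
     (\<forall>x \<in> (free_alg E0 E1 :: (('v,'e) gen list \<Rightarrow>\<^sub>0 'r) set).
        \<exists>y \<in> MstarM E0 E1 r s V. x - y \<in> lp_ideal E0 E1 r s)"

definition path_le :: "'v set \<Rightarrow> 'e set \<Rightarrow> ('e \<Rightarrow> 'v) \<Rightarrow> ('e \<Rightarrow> 'v) \<Rightarrow> 'v \<Rightarrow> 'v \<Rightarrow> bool" where
  "path_le E0 E1 r s v w \<longleftrightarrow> (\<exists>\<mu>. path_ok E0 E1 r s \<mu> \<and> prange r \<mu> = v \<and> psource s \<mu> = w)"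

definition hereditary :: "'v set \<Rightarrow> 'e set \<Rightarrow> ('e \<Rightarrow> 'v) \<Rightarrow> ('e \<Rightarrow> 'v) \<Rightarrow> 'v set \<Rightarrow> bool" where
  "hereditary E0 E1 r s H \<longleftrightarrow> (\<forall>v\<in>H. \<forall>w. path_le E0 E1 r s v w \<longrightarrow> w \<in> H)"

definition saturated :: "'v set \<Rightarrow> 'e set \<Rightarrow> ('e \<Rightarrow> 'v) \<Rightarrow> ('e \<Rightarrow> 'v) \<Rightarrow> 'v set \<Rightarrow> bool" where
  "saturated E0 E1 r s H \<longleftrightarrow>
     (\<forall>v\<in>E0. {e\<in>E1. r e = v} \<noteq> {} \<and> finite {e\<in>E1. r e = v} \<and> s ` {e\<in>E1. r e = v} \<subseteq> H
        \<longrightarrow> v \<in> H)"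

definition SigmaH :: "'v set \<Rightarrow> 'e set \<Rightarrow> ('e \<Rightarrow> 'v) \<Rightarrow> ('e \<Rightarrow> 'v) \<Rightarrow> 'v set \<Rightarrow> 'v set" where
  "SigmaH E0 E1 r s V = \<Inter>{H. H \<subseteq> E0 \<and> V \<subseteq> H \<and> hereditary E0 E1 r s H \<and> saturated E0 E1 r s H}"

end

theory Submission
  imports Defs
begin


lemma fmul_superset:
  assumes "finite A" "finite B" "Poly_Mapping.keys p \<subseteq> A" "Poly_Mapping.keys q \<subseteq> B"
  shows "fmul p q = (\<Sum>a\<in>A. \<Sum>b\<in>B. Poly_Mapping.single (a @ b) (Poly_Mapping.lookup p a * Poly_Mapping.lookup q b))"
proof -
  have "fmul p q = (\<Sum>a\<in>Poly_Mapping.keys p. \<Sum>b\<in>B. Poly_Mapping.single (a @ b) (Poly_Mapping.lookup p a * Poly_Mapping.lookup q b))"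
    unfolding fmul_def
    by (intro sum.cong refl sum.mono_neutral_left) (use assms in \<open>auto simp: in_keys_iff\<close>)
  also have "\<dots> = (\<Sum>a\<in>A. \<Sum>b\<in>B. Poly_Mapping.single (a @ b) (Poly_Mapping.lookup p a * Poly_Mapping.lookup q b))"
    by (intro sum.mono_neutral_left) (use assms in \<open>auto simp: in_keys_iff\<close>)
  finally show ?thesis .
qed

lemma fmul_add_left: "fmul (p + q) t = fmul p t + fmul q t"
proof -
  let ?A = "Poly_Mapping.keys p \<union> Poly_Mapping.keys q" and ?B = "Poly_Mapping.keys t"
  have "fmul (p+q) t = (\<Sum>a\<in>?A. \<Sum>b\<in>?B. Poly_Mapping.single (a @ b) (Poly_Mapping.lookup (p+q) a * Poly_Mapping.lookup t b))"
    by (rule fmul_superset) (auto dest: set_mp[OF keys_add])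
  moreover have "fmul p t = (\<Sum>a\<in>?A. \<Sum>b\<in>?B. Poly_Mapping.single (a @ b) (Poly_Mapping.lookup p a * Poly_Mapping.lookup t b))"
    by (rule fmul_superset) auto
  moreover have "fmul q t = (\<Sum>a\<in>?A. \<Sum>b\<in>?B. Poly_Mapping.single (a @ b) (Poly_Mapping.lookup q a * Poly_Mapping.lookup t b))"
    by (rule fmul_superset) auto
  ultimately show ?thesis
    by (simp add: lookup_add distrib_right single_add sum.distrib)
qed

lemma fmul_add_right: "fmul t (p + q) = fmul t p + fmul t q"
proof -
  let ?B = "Poly_Mapping.keys p \<union> Poly_Mapping.keys q" and ?A = "Poly_Mapping.keys t"
  have "fmul t (p+q) = (\<Sum>a\<in>?A. \<Sum>b\<in>?B. Poly_Mapping.single (a @ b) (Poly_Mapping.lookup t a * Poly_Mapping.lookup (p+q) b))"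
    by (rule fmul_superset) (auto dest: set_mp[OF keys_add])
  moreover have "fmul t p = (\<Sum>a\<in>?A. \<Sum>b\<in>?B. Poly_Mapping.single (a @ b) (Poly_Mapping.lookup t a * Poly_Mapping.lookup p b))"
    by (rule fmul_superset) auto
  moreover have "fmul t q = (\<Sum>a\<in>?A. \<Sum>b\<in>?B. Poly_Mapping.single (a @ b) (Poly_Mapping.lookup t a * Poly_Mapping.lookup q b))"
    by (rule fmul_superset) auto
  ultimately show ?thesis
    by (simp add: lookup_add distrib_left single_add sum.distrib)
qed

lemma fmul_zero_left[simp]: "fmul 0 p = 0" by (simp add: fmul_def)
lemma fmul_zero_right[simp]: "fmul p 0 = 0" by (simp add: fmul_def)

lemma fmul_diff_left: "fmul (p - q) t = fmul p t - fmul q t"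
proof -
  have "fmul (p - q) t + fmul q t = fmul p t" using fmul_add_left[of "p-q" q t] by simp
  then show ?thesis by (simp add: eq_diff_eq)
qed
lemma fmul_diff_right: "fmul t (p - q) = fmul t p - fmul t q"
proof -
  have "fmul t (p - q) + fmul t q = fmul t p" using fmul_add_right[of t "p-q" q] by simp
  then show ?thesis by (simp add: eq_diff_eq)
qed
lemma fmul_uminus_left: "fmul (- p) q = - fmul p q"
  using fmul_diff_left[of 0 p q] by simp
lemma fmul_uminus_right: "fmul q (- p) = - fmul q p"
  using fmul_diff_right[of q 0 p] by simp

lemma fmul_sum_left: "fmul (\<Sum>i\<in>I. f i) q = (\<Sum>i\<in>I. fmul (f i) q)"
  by (induction I rule: infinite_finite_induct) (auto simp: fmul_add_left)
lemma fmul_sum_right: "fmul q (\<Sum>i\<in>I. f i) = (\<Sum>i\<in>I. fmul q (f i))"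
  by (induction I rule: infinite_finite_induct) (auto simp: fmul_add_right)

lemma fmul_single: "fmul (Poly_Mapping.single a c) (Poly_Mapping.single b d) = Poly_Mapping.single (a @ b) (c * d)"
  by (cases "c = 0"; cases "d = 0") (auto simp: fmul_def)

lemma pm_expand: "p = (\<Sum>w\<in>Poly_Mapping.keys p. Poly_Mapping.single w (Poly_Mapping.lookup p w))"
proof (rule poly_mapping_eqI)
  fix k
  have "Poly_Mapping.lookup (\<Sum>w\<in>Poly_Mapping.keys p. Poly_Mapping.single w (Poly_Mapping.lookup p w)) k
     = (\<Sum>w\<in>Poly_Mapping.keys p. if w = k then Poly_Mapping.lookup p w else 0)"
    unfolding lookup_sum lookup_single when_def by (rule refl)
  also have "\<dots> = (if k \<in> Poly_Mapping.keys p then Poly_Mapping.lookup p k else 0)"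
    by (rule sum.delta[OF finite_keys])
  also have "\<dots> = Poly_Mapping.lookup p k"
    by (simp add: in_keys_iff)
  finally show "Poly_Mapping.lookup p k = Poly_Mapping.lookup (\<Sum>w\<in>Poly_Mapping.keys p. Poly_Mapping.single w (Poly_Mapping.lookup p w)) k" by simp
qed

lemma fmul_exp_left: "fmul p q = (\<Sum>a\<in>Poly_Mapping.keys p. fmul (Poly_Mapping.single a (Poly_Mapping.lookup p a)) q)"
proof -
  have "fmul p q = fmul (\<Sum>a\<in>Poly_Mapping.keys p. Poly_Mapping.single a (Poly_Mapping.lookup p a)) q"
    by (simp only: pm_expand[symmetric])
  then show ?thesis by (simp only: fmul_sum_left)
qed

lemma fmul_exp_right: "fmul p q = (\<Sum>a\<in>Poly_Mapping.keys q. fmul p (Poly_Mapping.single a (Poly_Mapping.lookup q a)))"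
proof -
  have "fmul p q = fmul p (\<Sum>a\<in>Poly_Mapping.keys q. Poly_Mapping.single a (Poly_Mapping.lookup q a))"
    by (simp only: pm_expand[symmetric])
  then show ?thesis by (simp only: fmul_sum_right)
qed

lemma fmul_assoc_s2: "fmul (fmul (Poly_Mapping.single a x) (Poly_Mapping.single b y)) t
   = fmul (Poly_Mapping.single a x) (fmul (Poly_Mapping.single b y) t)"
proof -
  have "fmul (fmul (Poly_Mapping.single a x) (Poly_Mapping.single b y)) t =
    (\<Sum>c\<in>Poly_Mapping.keys t. fmul (fmul (Poly_Mapping.single a x) (Poly_Mapping.single b y)) (Poly_Mapping.single c (Poly_Mapping.lookup t c)))"
    by (rule fmul_exp_right)
  also have "\<dots> = (\<Sum>c\<in>Poly_Mapping.keys t. fmul (Poly_Mapping.single a x) (fmul (Poly_Mapping.single b y) (Poly_Mapping.single c (Poly_Mapping.lookup t c))))"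
    by (simp only: fmul_single mult.assoc append_assoc)
  also have "\<dots> = fmul (Poly_Mapping.single a x) (\<Sum>c\<in>Poly_Mapping.keys t. fmul (Poly_Mapping.single b y) (Poly_Mapping.single c (Poly_Mapping.lookup t c)))"
    by (simp only: fmul_sum_right)
  also have "\<dots> = fmul (Poly_Mapping.single a x) (fmul (Poly_Mapping.single b y) t)"
    by (simp only: fmul_exp_right[symmetric])
  finally show ?thesis .
qed

lemma fmul_assoc_s1: "fmul (fmul (Poly_Mapping.single a x) q) t = fmul (Poly_Mapping.single a x) (fmul q t)"
proof -
  have "fmul (fmul (Poly_Mapping.single a x) q) t =
    fmul (\<Sum>b\<in>Poly_Mapping.keys q. fmul (Poly_Mapping.single a x) (Poly_Mapping.single b (Poly_Mapping.lookup q b))) t"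
    by (simp only: fmul_exp_right[symmetric])
  also have "\<dots> = (\<Sum>b\<in>Poly_Mapping.keys q. fmul (fmul (Poly_Mapping.single a x) (Poly_Mapping.single b (Poly_Mapping.lookup q b))) t)"
    by (simp only: fmul_sum_left)
  also have "\<dots> = (\<Sum>b\<in>Poly_Mapping.keys q. fmul (Poly_Mapping.single a x) (fmul (Poly_Mapping.single b (Poly_Mapping.lookup q b)) t))"
    by (simp only: fmul_assoc_s2)
  also have "\<dots> = fmul (Poly_Mapping.single a x) (\<Sum>b\<in>Poly_Mapping.keys q. fmul (Poly_Mapping.single b (Poly_Mapping.lookup q b)) t)"
    by (simp only: fmul_sum_right)
  also have "\<dots> = fmul (Poly_Mapping.single a x) (fmul q t)"
    by (simp only: fmul_exp_left[symmetric])
  finally show ?thesis .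
qed

lemma fmul_assoc: "fmul (fmul p q) t = fmul p (fmul q t)"
proof -
  have "fmul (fmul p q) t = fmul (\<Sum>a\<in>Poly_Mapping.keys p. fmul (Poly_Mapping.single a (Poly_Mapping.lookup p a)) q) t"
    by (simp only: fmul_exp_left[symmetric])
  also have "\<dots> = (\<Sum>a\<in>Poly_Mapping.keys p. fmul (Poly_Mapping.single a (Poly_Mapping.lookup p a)) (fmul q t))"
    by (simp only: fmul_sum_left fmul_assoc_s1)
  also have "\<dots> = fmul p (fmul q t)"
    by (simp only: fmul_exp_left[symmetric])
  finally show ?thesis .
qed

lemma mon_append: "mon (a @ b) = fmul (mon a) (mon b :: _ \<Rightarrow>\<^sub>0 'r::comm_ring_1)"
  by (simp add: mon_def fmul_single)

lemma fsmult_mon: "fsmult c (mon w) = Poly_Mapping.single w c"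
  by (simp add: fsmult_def mon_def fmul_single)

lemma fsmult_comm: "fmul (Poly_Mapping.single [] c) p = fmul p (Poly_Mapping.single [] c)"
proof -
  have "fmul (Poly_Mapping.single [] c) p = (\<Sum>b\<in>Poly_Mapping.keys p. fmul (Poly_Mapping.single [] c) (Poly_Mapping.single b (Poly_Mapping.lookup p b)))"
    by (rule fmul_exp_right)
  also have "\<dots> = (\<Sum>b\<in>Poly_Mapping.keys p. fmul (Poly_Mapping.single b (Poly_Mapping.lookup p b)) (Poly_Mapping.single [] c))"
    by (rule sum.cong[OF refl]) (simp add: fmul_single mult.commute)
  also have "\<dots> = fmul p (Poly_Mapping.single [] c)"
    by (simp only: fmul_exp_left[symmetric])
  finally show ?thesis .
qed



type_synonym ('v,'e) pt = "'v \<times> (nat \<Rightarrow> 'e option)"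

definition hg :: "'e set \<Rightarrow> ('e \<Rightarrow> 'v) \<Rightarrow> ('e \<Rightarrow> 'v) \<Rightarrow> ('v,'e) gen \<Rightarrow> ('v,'e) pt \<Rightarrow> ('v,'e) pt option" where
  "hg E1 r s g \<xi> = (case g of P v \<Rightarrow> if fst \<xi> = v then Some \<xi> else None
     | S e \<Rightarrow> if snd \<xi> 0 = Some e then Some (s e, \<lambda>i. snd \<xi> (Suc i)) else None
     | SS e \<Rightarrow> if e \<in> E1 \<and> fst \<xi> = s e then Some (r e, case_nat (Some e) (snd \<xi>)) else None)"

fun hw :: "'e set \<Rightarrow> ('e \<Rightarrow> 'v) \<Rightarrow> ('e \<Rightarrow> 'v) \<Rightarrow> ('v,'e) gen list \<Rightarrow> ('v,'e) pt \<Rightarrow> ('v,'e) pt option" where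
  "hw E1 r s [] \<xi> = Some \<xi>"
| "hw E1 r s (g # w) \<xi> = Option.bind (hg E1 r s g \<xi>) (hw E1 r s w)"

definition rho :: "'e set \<Rightarrow> ('e \<Rightarrow> 'v) \<Rightarrow> ('e \<Rightarrow> 'v) \<Rightarrow> ('v,'e) gen list \<Rightarrow> (('v,'e) pt \<Rightarrow> 'r::comm_ring_1) \<Rightarrow> ('v,'e) pt \<Rightarrow> 'r" where
  "rho E1 r s w F \<xi> = (case hw E1 r s w \<xi> of None \<Rightarrow> 0 | Some \<eta> \<Rightarrow> F \<eta>)"

definition Lop :: "'e set \<Rightarrow> ('e \<Rightarrow> 'v) \<Rightarrow> ('e \<Rightarrow> 'v) \<Rightarrow> (('v,'e) gen list \<Rightarrow>\<^sub>0 'r::comm_ring_1) \<Rightarrow> (('v,'e) pt \<Rightarrow> 'r) \<Rightarrow> ('v,'e) pt \<Rightarrow> 'r" where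
  "Lop E1 r s p F \<xi> = (\<Sum>w\<in>Poly_Mapping.keys p. Poly_Mapping.lookup p w * rho E1 r s w F \<xi>)"

lemma hw_append: "hw E1 r s (a @ b) \<xi> = Option.bind (hw E1 r s a \<xi>) (hw E1 r s b)"
proof (induction a arbitrary: \<xi>)
  case Nil then show ?case by simp
next
  case (Cons g a) show ?case by (cases "hg E1 r s g \<xi>") (simp_all add: Cons.IH)
qed

lemma rho_append: "rho E1 r s (a @ b) F \<xi> = rho E1 r s a (rho E1 r s b F) \<xi>"
  by (auto simp: rho_def hw_append split: option.split)

lemma rho_lin: "finite B \<Longrightarrow> rho E1 r s a (\<lambda>\<eta>. \<Sum>b\<in>B. c b * G b \<eta>) \<xi> = (\<Sum>b\<in>B. c b * rho E1 r s a (G b) \<xi>)"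
  by (simp add: rho_def split: option.split)

lemma Lop_superset: "finite K \<Longrightarrow> Poly_Mapping.keys p \<subseteq> K \<Longrightarrow>
   Lop E1 r s p F \<xi> = (\<Sum>w\<in>K. Poly_Mapping.lookup p w * rho E1 r s w F \<xi>)"
  unfolding Lop_def by (rule sum.mono_neutral_left) (auto simp: in_keys_iff)

lemma Lop_add: "Lop E1 r s (p + q) F \<xi> = Lop E1 r s p F \<xi> + Lop E1 r s q F \<xi>"
proof -
  let ?K = "Poly_Mapping.keys p \<union> Poly_Mapping.keys q"
  have "Lop E1 r s (p + q) F \<xi> = (\<Sum>w\<in>?K. Poly_Mapping.lookup (p+q) w * rho E1 r s w F \<xi>)"
    by (rule Lop_superset) (auto dest: set_mp[OF keys_add])
  moreover have "Lop E1 r s p F \<xi> = (\<Sum>w\<in>?K. Poly_Mapping.lookup p w * rho E1 r s w F \<xi>)"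
    by (rule Lop_superset) auto
  moreover have "Lop E1 r s q F \<xi> = (\<Sum>w\<in>?K. Poly_Mapping.lookup q w * rho E1 r s w F \<xi>)"
    by (rule Lop_superset) auto
  ultimately show ?thesis by (simp add: lookup_add distrib_right sum.distrib)
qed

lemma Lop_zero[simp]: "Lop E1 r s 0 F \<xi> = 0" by (simp add: Lop_def)

lemma Lop_diff: "Lop E1 r s (p - q) F \<xi> = Lop E1 r s p F \<xi> - Lop E1 r s q F \<xi>"
proof -
  have "Lop E1 r s (p - q) F \<xi> + Lop E1 r s q F \<xi> = Lop E1 r s p F \<xi>"
    using Lop_add[of E1 r s "p - q" q F \<xi>] by simp
  then show ?thesis by (simp add: eq_diff_eq)
qed

lemma Lop_sum: "Lop E1 r s (\<Sum>i\<in>I. f i) F \<xi> = (\<Sum>i\<in>I. Lop E1 r s (f i) F \<xi>)"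
  by (induction I rule: infinite_finite_induct) (auto simp: Lop_add)

lemma Lop_single: "Lop E1 r s (Poly_Mapping.single w c) F \<xi> = c * rho E1 r s w F \<xi>"
  by (simp add: Lop_def)

lemma Lop_mon: "Lop E1 r s (mon w) F \<xi> = rho E1 r s w F \<xi>"
  by (simp add: mon_def Lop_single)

lemma Lop_fmul: "Lop E1 r s (fmul p q) F \<xi> = Lop E1 r s p (Lop E1 r s q F) \<xi>"
proof -
  have "Lop E1 r s (fmul p q) F \<xi> = (\<Sum>a\<in>Poly_Mapping.keys p. \<Sum>b\<in>Poly_Mapping.keys q.
      Poly_Mapping.lookup p a * Poly_Mapping.lookup q b * rho E1 r s (a @ b) F \<xi>)"
    by (simp add: fmul_def Lop_sum Lop_single)
  also have "\<dots> = (\<Sum>a\<in>Poly_Mapping.keys p. Poly_Mapping.lookup p a *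
      (\<Sum>b\<in>Poly_Mapping.keys q. Poly_Mapping.lookup q b * rho E1 r s a (rho E1 r s b F) \<xi>))"
    by (simp add: rho_append sum_distrib_left mult.assoc)
  also have "\<dots> = Lop E1 r s p (Lop E1 r s q F) \<xi>"
    unfolding Lop_def by (simp add: rho_lin)
  finally show ?thesis .
qed

definition regv :: "'e set \<Rightarrow> ('e \<Rightarrow> 'v) \<Rightarrow> 'v \<Rightarrow> bool" where
  "regv E1 r u \<longleftrightarrow> {e\<in>E1. r e = u} \<noteq> {} \<and> finite {e\<in>E1. r e = u}"

definition loc :: "'v set \<Rightarrow> 'e set \<Rightarrow> ('e \<Rightarrow> 'v) \<Rightarrow> ('e \<Rightarrow> 'v) \<Rightarrow> 'v set \<Rightarrow> ('v,'e) pt \<Rightarrow> bool" where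
  "loc E0 E1 r s H \<xi> \<longleftrightarrow> fst \<xi> \<in> E0 \<and> fst \<xi> \<notin> H \<and>
     (case snd \<xi> 0 of None \<Rightarrow> \<not> regv E1 r (fst \<xi>) \<and> (\<forall>i. snd \<xi> i = None)
       | Some e \<Rightarrow> e \<in> E1 \<and> r e = fst \<xi> \<and> s e \<notin> H)"

definition shp :: "('e \<Rightarrow> 'v) \<Rightarrow> ('v,'e) pt \<Rightarrow> ('v,'e) pt" where
  "shp s \<xi> = ((case snd \<xi> 0 of None \<Rightarrow> fst \<xi> | Some e \<Rightarrow> s e), \<lambda>i. snd \<xi> (Suc i))"

definition valid :: "'v set \<Rightarrow> 'e set \<Rightarrow> ('e \<Rightarrow> 'v) \<Rightarrow> ('e \<Rightarrow> 'v) \<Rightarrow> 'v set \<Rightarrow> ('v,'e) pt \<Rightarrow> bool" where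
  "valid E0 E1 r s H \<xi> \<longleftrightarrow> (\<forall>n. loc E0 E1 r s H ((shp s ^^ n) \<xi>))"

lemma valid_loc: "valid E0 E1 r s H \<xi> \<Longrightarrow> loc E0 E1 r s H \<xi>"
  unfolding valid_def by (metis funpow_0)

lemma valid_shp: "valid E0 E1 r s H \<xi> \<Longrightarrow> valid E0 E1 r s H (shp s \<xi>)"
  unfolding valid_def by (metis comp_apply funpow_Suc_right)

context
  fixes E0 :: "'v set" and E1 :: "'e set" and r s :: "'e \<Rightarrow> 'v" and H :: "'v set"
  assumes rE0: "r ` E1 \<subseteq> E0"
    and hered: "\<And>e. e \<in> E1 \<Longrightarrow> s e \<notin> H \<Longrightarrow> r e \<notin> H"
    and sE0: "s ` E1 \<subseteq> E0"
    and sat: "\<And>u. u \<in> E0 \<Longrightarrow> regv E1 r u \<Longrightarrow> u \<notin> H \<Longrightarrow> \<exists>e\<in>E1. r e = u \<and> s e \<notin> H"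
begin

lemma valid_hg: assumes "valid E0 E1 r s H \<xi>" "hg E1 r s g \<xi> = Some \<eta>"
  shows "valid E0 E1 r s H \<eta>"
proof (cases g)
  case (P v) then show ?thesis using assms by (auto simp: hg_def split: if_splits)
next
  case (S e)
  then have "\<eta> = shp s \<xi>" using assms by (auto simp: hg_def shp_def split: if_splits)
  then show ?thesis using valid_shp assms(1) by blast
next
  case (SS e)
  then have e: "e \<in> E1" "fst \<xi> = s e" and eta: "\<eta> = (r e, case_nat (Some e) (snd \<xi>))"
    using assms by (auto simp: hg_def split: if_splits)
  have l0: "loc E0 E1 r s H \<xi>" using valid_loc assms(1) .
  have sh: "shp s \<eta> = \<xi>" using e eta by (auto simp: shp_def prod_eq_iff)
  show ?thesis unfolding valid_def
  proof
    fix n show "loc E0 E1 r s H ((shp s ^^ n) \<eta>)"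
    proof (cases n)
      case 0
      then show ?thesis using e eta l0 rE0 hered[of e] by (auto simp: loc_def)
    next
      case (Suc m)
      then have "(shp s ^^ n) \<eta> = (shp s ^^ m) \<xi>" using sh by (simp add: funpow_swap1)
      then show ?thesis using assms(1) by (simp add: valid_def)
    qed
  qed
qed

lemma valid_hw: "valid E0 E1 r s H \<xi> \<Longrightarrow> hw E1 r s w \<xi> = Some \<eta> \<Longrightarrow> valid E0 E1 r s H \<eta>"
proof (induction w arbitrary: \<xi>)
  case Nil then show ?case by simp
next
  case (Cons g w)
  then obtain \<zeta> where "hg E1 r s g \<xi> = Some \<zeta>" "hw E1 r s w \<zeta> = Some \<eta>"
    by (auto simp: Option.bind_eq_Some_conv)
  then show ?case using Cons valid_hg by blast
qed

lemma zero_on_valid: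
  assumes "\<And>\<eta>. valid E0 E1 r s H \<eta> \<Longrightarrow> G \<eta> = 0" "valid E0 E1 r s H \<xi>"
  shows "Lop E1 r s p G \<xi> = 0"
proof -
  have "rho E1 r s w G \<xi> = 0" for w
    using assms valid_hw[of \<xi> w] by (auto simp: rho_def split: option.split)
  then show ?thesis by (simp add: Lop_def)
qed

definition Zp :: "(('v,'e) gen list \<Rightarrow>\<^sub>0 'r::comm_ring_1) \<Rightarrow> bool" where
  "Zp p \<longleftrightarrow> (\<forall>F \<xi>. valid E0 E1 r s H \<xi> \<longrightarrow> Lop E1 r s p F \<xi> = 0)"

lemma Zp_D: assumes "Zp p" "valid E0 E1 r s H \<xi>" shows "Lop E1 r s p F \<xi> = 0"
proof -
  have "\<forall>F \<xi>. valid E0 E1 r s H \<xi> \<longrightarrow> Lop E1 r s p F \<xi> = 0" using assms(1) by (simp only: Zp_def)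
  then have "valid E0 E1 r s H \<xi> \<longrightarrow> Lop E1 r s p F \<xi> = 0" by (rule allE[of _ F]) (rule spec)
  then show ?thesis using assms(2) by (rule mp)
qed

lemma Zp_fmul_left: "Zp a \<Longrightarrow> Zp (fmul x a)"
  unfolding Zp_def Lop_fmul by (auto intro: zero_on_valid)

lemma Zp_fmul_right: "Zp a \<Longrightarrow> Zp (fmul a x)"
  unfolding Zp_def Lop_fmul by auto

lemma Zp_add: "Zp a \<Longrightarrow> Zp b \<Longrightarrow> Zp (a + b)"
  unfolding Zp_def by (simp add: Lop_add)

lemma Zp_zero: "Zp 0" unfolding Zp_def by simp

lemma fmul_mon1: "fmul (mon [a]) (mon [b]) = (mon [a, b] :: _ \<Rightarrow>\<^sub>0 'r::comm_ring_1)"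
proof -
  have "mon ([a] @ [b]) = (fmul (mon [a]) (mon [b]) :: _ \<Rightarrow>\<^sub>0 'r)" by (rule mon_append)
  then show ?thesis by simp
qed

lemma Zp_ideal: "a \<in> lp_ideal E0 E1 r s \<Longrightarrow> Zp a"
proof (induction rule: lp_ideal.induct)
  case (idem v) then show ?case
    by (simp add: Zp_def pv_def fmul_mon1 Lop_diff Lop_mon rho_def hg_def)
next
  case (orth v w) then show ?case
    by (simp add: Zp_def pv_def fmul_mon1 Lop_diff Lop_mon rho_def hg_def)
next
  case (rs e) then show ?case
    by (auto simp: Zp_def pv_def se_def fmul_mon1 Lop_diff Lop_mon rho_def hg_def loc_def dest!: valid_loc)
next
  case (sr e) then show ?case
    by (auto simp: Zp_def pv_def se_def fmul_mon1 Lop_diff Lop_mon rho_def hg_def)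
next
  case (rss e) then show ?case
    by (auto simp: Zp_def pv_def ses_def fmul_mon1 Lop_diff Lop_mon rho_def hg_def)
next
  case (ssr e) then show ?case
    by (auto simp: Zp_def pv_def ses_def fmul_mon1 Lop_diff Lop_mon rho_def hg_def)
next
  case (ck1 e f) then show ?case
    by (auto simp: Zp_def pv_def ses_def se_def fmul_mon1 Lop_diff Lop_mon rho_def hg_def)
next
  case (ck2 v)
  let ?A = "{e\<in>E1. r e = v}"
  show ?case unfolding Zp_def
  proof (intro allI impI)
    fix F and \<xi> :: "('v,'e) pt" assume val: "valid E0 E1 r s H \<xi>"
    have l: "loc E0 E1 r s H \<xi>" using valid_loc val .
    have t: "Lop E1 r s (fmul (se e) (ses e)) F \<xi> = (if snd \<xi> 0 = Some e then F \<xi> else 0)" if "e \<in> ?A" for e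
    proof -
      have "case_nat (Some e) (\<lambda>i. snd \<xi> (Suc i)) = snd \<xi>" if "snd \<xi> 0 = Some e"
        using that by (auto simp: fun_eq_iff split: nat.split)
      moreover have "r e = fst \<xi>" if "snd \<xi> 0 = Some e" using l that by (auto simp: loc_def)
      ultimately show ?thesis using \<open>e \<in> ?A\<close>
        by (auto simp: se_def ses_def fmul_mon1 Lop_mon rho_def hg_def)
    qed
    have sumeq: "(\<Sum>e\<in>?A. Lop E1 r s (fmul (se e) (ses e)) F \<xi>) = (if fst \<xi> = v then F \<xi> else 0)"
    proof (cases "snd \<xi> 0")
      case None
      then have "fst \<xi> \<noteq> v" using l ck2 by (auto simp: loc_def regv_def)
      then show ?thesis using None t by simp
    next
      case (Some e0)
      then have e0: "e0 \<in> E1" "r e0 = fst \<xi>" using l by (auto simp: loc_def)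
      have "(\<Sum>e\<in>?A. Lop E1 r s (fmul (se e) (ses e)) F \<xi>) = (\<Sum>e\<in>?A. if e0 = e then F \<xi> else 0)"
        using t Some by (intro sum.cong) auto
      also have "\<dots> = (if e0 \<in> ?A then F \<xi> else 0)"
        using ck2 by (simp add: sum.delta)
      finally show ?thesis using e0 by simp
    qed
    show "Lop E1 r s (pv v - (\<Sum>e\<in>?A. fmul (se e) (ses e))) F \<xi> = 0"
      by (simp add: Lop_diff Lop_sum sumeq pv_def Lop_mon rho_def hg_def)
  qed
next
  case zero then show ?case by (rule Zp_zero)
next
  case (add a b) show ?case by (rule Zp_add[OF add.IH])
next
  case (left a x) show ?case by (rule Zp_fmul_left[OF left.IH])
next
  case (right a x) show ?case by (rule Zp_fmul_right[OF right.IH])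
qed


lemma exists_valid:
  assumes w: "w \<in> E0" "w \<notin> H"
  shows "\<exists>\<xi>. valid E0 E1 r s H \<xi> \<and> fst \<xi> = w"
proof -
  define pk where "pk u = (SOME e. e \<in> E1 \<and> r e = u \<and> s e \<notin> H)" for u
  have pk: "pk u \<in> E1 \<and> r (pk u) = u \<and> s (pk u) \<notin> H" if "u \<in> E0" "regv E1 r u" "u \<notin> H" for u
  proof -
    from sat[OF that] obtain e where "e \<in> E1 \<and> r e = u \<and> s e \<notin> H" by blast
    then show ?thesis unfolding pk_def by (rule someI[where P="\<lambda>e. e \<in> E1 \<and> r e = u \<and> s e \<notin> H"])
  qed
  define nx where "nx u = (if regv E1 r u then s (pk u) else u)" for u
  define vs where "vs n = (nx ^^ n) w" for n
  define f where "f n = (if regv E1 r (vs n) then Some (pk (vs n)) else None)" for n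
  have vsS: "vs (Suc n) = nx (vs n)" for n by (simp add: vs_def)
  have vs0: "vs 0 = w" by (simp add: vs_def)
  have inv: "vs n \<in> E0 \<and> vs n \<notin> H" for n
  proof (induction n)
    case 0 then show ?case using w vs0 by simp
  next
    case (Suc n) then show ?case using pk[of "vs n"] sE0 by (auto simp: vsS nx_def)
  qed
  have stay: "vs (i + n) = vs n" if "\<not> regv E1 r (vs n)" for n i
    by (induction i) (use that in \<open>auto simp: vsS nx_def\<close>)
  have shp_eq: "(shp s ^^ n) (w, f) = (vs n, \<lambda>i. f (i + n))" for n
  proof (induction n)
    case 0 then show ?case by (simp add: vs0)
  next
    case (Suc n) then show ?case by (auto simp: shp_def vsS nx_def f_def)
  qed
  have "valid E0 E1 r s H (w, f)"
    unfolding valid_def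
  proof
    fix n
    show "loc E0 E1 r s H ((shp s ^^ n) (w, f))"
    proof (cases "regv E1 r (vs n)")
      case True then show ?thesis using inv[of n] pk[of "vs n"] by (simp add: shp_eq loc_def f_def)
    next
      case False
      have "f (i + n) = None" for i using False stay[OF False, of i] by (simp add: f_def)
      then show ?thesis using inv[of n] False by (simp add: shp_eq loc_def)
    qed
  qed
  then show ?thesis by auto
qed

lemma Zp_spath:
  assumes "path_ok E0 E1 r s \<mu>" "prange r \<mu> \<in> H"
  shows "Zp (spath \<mu> :: _ \<Rightarrow>\<^sub>0 'r::comm_ring_1)"
proof (cases \<mu>)
  case (Inl v)
  then show ?thesis using assms
    by (auto simp: Zp_def pv_def Lop_mon rho_def hg_def loc_def dest!: valid_loc)
next
  case (Inr es)
  then obtain e es' where es: "es = e # es'" using assms by (cases es) auto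
  have "hg E1 r s (S e) \<xi> = None" if "valid E0 E1 r s H \<xi>" for \<xi>
    using valid_loc[OF that] assms Inr es by (auto simp: hg_def loc_def)
  then show ?thesis using Inr es
    by (auto simp: Zp_def Lop_mon rho_def)
qed

lemma Zp_fsmult: "Zp a \<Longrightarrow> Zp (fsmult c a)"
  unfolding fsmult_def by (rule Zp_fmul_left)

lemma Zp_Mspace:
  assumes "V \<subseteq> H"
  shows "m \<in> Mspace E0 E1 r s V \<Longrightarrow> Zp (m :: _ \<Rightarrow>\<^sub>0 'r::comm_ring_1)"
  unfolding Mspace_def
proof (induction rule: rspan.induct)
  case zero then show ?case by (rule Zp_zero)
next
  case (base x) then show ?case using assms by (auto intro!: Zp_fmul_right Zp_spath)
next
  case (add a b) show ?case by (rule Zp_add[OF add.IH])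
next
  case (smult a c) show ?case by (rule Zp_fsmult[OF smult.IH])
qed

lemma Zp_MstarM:
  assumes "V \<subseteq> H"
  shows "m \<in> MstarM E0 E1 r s V \<Longrightarrow> Zp (m :: _ \<Rightarrow>\<^sub>0 'r::comm_ring_1)"
  unfolding MstarM_def
proof (induction rule: rspan.induct)
  case zero then show ?case by (rule Zp_zero)
next
  case (base x)
  then obtain n m where nm: "x = fmul n m" "m \<in> Mspace E0 E1 r s V" by blast
  show ?case unfolding nm(1) by (rule Zp_fmul_left[OF Zp_Mspace[OF assms nm(2)]])
next
  case (add a b) show ?case by (rule Zp_add[OF add.IH])
next
  case (smult a c) show ?case by (rule Zp_fsmult[OF smult.IH])
qed

end

lemma hered_Inter: "(\<And>H. H \<in> F \<Longrightarrow> hereditary E0 E1 r s H) \<Longrightarrow> hereditary E0 E1 r s (\<Inter>F)"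
  unfolding hereditary_def by (auto 0 3)

lemma sat_Inter: "(\<And>H. H \<in> F \<Longrightarrow> saturated E0 E1 r s H) \<Longrightarrow> saturated E0 E1 r s (\<Inter>F)"
  unfolding saturated_def
proof (intro ballI impI InterI)
  fix v X assume a: "\<And>H. H \<in> F \<Longrightarrow> \<forall>v\<in>E0. {e \<in> E1. r e = v} \<noteq> {} \<and> finite {e \<in> E1. r e = v} \<and> s ` {e \<in> E1. r e = v} \<subseteq> H \<longrightarrow> v \<in> H"
    and v: "v \<in> E0" and c: "{e \<in> E1. r e = v} \<noteq> {} \<and> finite {e \<in> E1. r e = v} \<and> s ` {e \<in> E1. r e = v} \<subseteq> \<Inter>F"
    and X: "X \<in> F"
  have "s ` {e \<in> E1. r e = v} \<subseteq> X" using c X by blast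
  then show "v \<in> X" using a[OF X] v c by blast
qed

lemma SigmaH_props:
  assumes "V \<subseteq> E0" "s ` E1 \<subseteq> E0"
  shows "SigmaH E0 E1 r s V \<subseteq> E0" "V \<subseteq> SigmaH E0 E1 r s V"
    "hereditary E0 E1 r s (SigmaH E0 E1 r s V)" "saturated E0 E1 r s (SigmaH E0 E1 r s V)"
proof -
  let ?F = "{H. H \<subseteq> E0 \<and> V \<subseteq> H \<and> hereditary E0 E1 r s H \<and> saturated E0 E1 r s H}"
  have SH: "SigmaH E0 E1 r s V = \<Inter>?F" by (simp add: SigmaH_def)
  have pE0: "psource s \<mu> \<in> E0" if "path_ok E0 E1 r s \<mu>" for \<mu>
  proof (cases \<mu>)
    case (Inl v) then show ?thesis using that by simp
  next
    case (Inr es)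
    then have "es \<noteq> []" "set es \<subseteq> E1" using that by auto
    then have "last es \<in> E1" using last_in_set by blast
    then show ?thesis using Inr assms(2) by auto
  qed
  have "hereditary E0 E1 r s E0" unfolding hereditary_def path_le_def using pE0 by blast
  moreover have "saturated E0 E1 r s E0" unfolding saturated_def by blast
  ultimately have E0in: "E0 \<in> ?F" using assms(1) by blast
  show "SigmaH E0 E1 r s V \<subseteq> E0" unfolding SH using E0in by (rule Inter_lower)
  show "V \<subseteq> SigmaH E0 E1 r s V" unfolding SH by (rule Inter_greatest) simp
  show "hereditary E0 E1 r s (SigmaH E0 E1 r s V)" unfolding SH by (rule hered_Inter) simp
  show "saturated E0 E1 r s (SigmaH E0 E1 r s V)" unfolding SH by (rule sat_Inter) simp
qed

lemma only_if_dir: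
  fixes E0 :: "'v set" and E1 :: "'e set"
  assumes rE0: "r ` E1 \<subseteq> E0" and sE0: "s ` E1 \<subseteq> E0" and VE0: "V \<subseteq> E0"
    and full: "is_full TYPE('r::comm_ring_1) E0 E1 r s V"
  shows "SigmaH E0 E1 r s V = E0"
proof (rule ccontr)
  let ?H = "SigmaH E0 E1 r s V"
  note props = SigmaH_props[OF VE0 sE0, of r]
  assume "?H \<noteq> E0"
  then obtain w where w: "w \<in> E0" "w \<notin> ?H" using props(1) by blast
  have hered: "r e \<notin> ?H" if "e \<in> E1" "s e \<notin> ?H" for e
  proof
    assume "r e \<in> ?H"
    have "path_le E0 E1 r s (r e) (s e)" unfolding path_le_def
      by (rule exI[of _ "Inr [e]"]) (use that in auto)
    then show False using props(3) \<open>r e \<in> ?H\<close> that unfolding hereditary_def by blast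
  qed
  have sat: "\<exists>e\<in>E1. r e = u \<and> s e \<notin> ?H" if "u \<in> E0" "regv E1 r u" "u \<notin> ?H" for u
    using props(4) that unfolding saturated_def regv_def by blast
  obtain \<xi> where xi: "valid E0 E1 r s ?H \<xi>" "fst \<xi> = w"
    using exists_valid[OF rE0 hered sE0 sat w] by blast
  have "pv w \<in> (free_alg E0 E1 :: (('v,'e) gen list \<Rightarrow>\<^sub>0 'r) set)"
    using w by (simp add: free_alg_def pv_def mon_def gen_ok_def)
  moreover have "\<forall>x \<in> (free_alg E0 E1 :: (('v,'e) gen list \<Rightarrow>\<^sub>0 'r) set).
        \<exists>y \<in> MstarM E0 E1 r s V. x - y \<in> lp_ideal E0 E1 r s"
    using full unfolding is_full_def by simp
  ultimately have "\<exists>y \<in> MstarM E0 E1 r s V. (pv w :: _ \<Rightarrow>\<^sub>0 'r) - y \<in> lp_ideal E0 E1 r s"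
    by (rule bspec[rotated])
  then obtain y :: "_ \<Rightarrow>\<^sub>0 'r" where y: "y \<in> MstarM E0 E1 r s V" "pv w - y \<in> lp_ideal E0 E1 r s"
    by blast
  have Z1: "Zp E0 E1 r s ?H (pv w - y)" by (rule Zp_ideal[OF rE0 hered sE0 sat y(2)])
  have Z2: "Zp E0 E1 r s ?H y" by (rule Zp_MstarM[OF rE0 hered sE0 sat props(2) y(1)])
  have "Zp E0 E1 r s ?H ((pv w - y) + y)" by (rule Zp_add[OF rE0 hered sE0 sat Z1 Z2])
  then have Zw: "Zp E0 E1 r s ?H (pv w :: _ \<Rightarrow>\<^sub>0 'r)" by simp
  have "Lop E1 r s (pv w :: _ \<Rightarrow>\<^sub>0 'r) (\<lambda>_. 1) \<xi> = 0"
    by (rule Zp_D[OF rE0 hered sE0 sat Zw xi(1)])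
  moreover have "Lop E1 r s (pv w :: _ \<Rightarrow>\<^sub>0 'r) (\<lambda>_. 1) \<xi> = 1"
    using xi by (simp add: pv_def Lop_mon rho_def hg_def)
  ultimately show False by simp
qed



definition cng :: "'v set \<Rightarrow> 'e set \<Rightarrow> ('e \<Rightarrow> 'v) \<Rightarrow> ('e \<Rightarrow> 'v) \<Rightarrow>
   (('v,'e) gen list \<Rightarrow>\<^sub>0 'r::comm_ring_1) \<Rightarrow> (('v,'e) gen list \<Rightarrow>\<^sub>0 'r) \<Rightarrow> bool" where
  "cng E0 E1 r s a b \<longleftrightarrow> a - b \<in> lp_ideal E0 E1 r s"

lemma fmul_one_left: "fmul (Poly_Mapping.single [] 1) p = p"
proof -
  have "fmul (Poly_Mapping.single [] 1) p = (\<Sum>b\<in>Poly_Mapping.keys p. fmul (Poly_Mapping.single [] 1) (Poly_Mapping.single b (Poly_Mapping.lookup p b)))"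
    by (rule fmul_exp_right)
  also have "\<dots> = (\<Sum>b\<in>Poly_Mapping.keys p. Poly_Mapping.single b (Poly_Mapping.lookup p b))"
    by (simp add: fmul_single)
  also have "\<dots> = p" by (rule pm_expand[symmetric])
  finally show ?thesis .
qed

lemma mon_nil: "mon [] = Poly_Mapping.single [] 1" by (simp add: mon_def)

lemma fmul_fsmult_comm: "fmul x (fsmult c a) = fsmult c (fmul x a)"
proof -
  have "fmul x (fmul (Poly_Mapping.single [] c) a) = fmul (fmul x (Poly_Mapping.single [] c)) a"
    by (simp only: fmul_assoc)
  also have "\<dots> = fmul (fmul (Poly_Mapping.single [] c) x) a" by (simp only: fsmult_comm)
  also have "\<dots> = fmul (Poly_Mapping.single [] c) (fmul x a)" by (simp only: fmul_assoc)
  finally show ?thesis unfolding fsmult_def .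
qed

lemma fmul_mon1': "fmul (mon [a]) (mon [b]) = (mon [a, b] :: _ \<Rightarrow>\<^sub>0 'r::comm_ring_1)"
proof -
  have "mon ([a] @ [b]) = (fmul (mon [a]) (mon [b]) :: _ \<Rightarrow>\<^sub>0 'r)" by (rule mon_append)
  then show ?thesis by simp
qed

lemma fmul_fsmult_left: "fmul (fsmult c a) x = fsmult c (fmul a x)"
  unfolding fsmult_def by (simp add: fmul_assoc)

lemma I_neg: "a \<in> lp_ideal E0 E1 r s \<Longrightarrow> - a \<in> lp_ideal E0 E1 r s"
proof -
  assume "a \<in> lp_ideal E0 E1 r s"
  then have "fmul (Poly_Mapping.single [] (-1)) a \<in> lp_ideal E0 E1 r s" by (rule lp_ideal.left)
  moreover have "fmul (Poly_Mapping.single [] (-1)) a = - a"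
    by (simp add: single_uminus fmul_uminus_left fmul_one_left)
  ultimately show ?thesis by simp
qed

lemma cng_refl: "cng E0 E1 r s a a"
  by (simp add: cng_def lp_ideal.zero)

lemma cng_sym: "cng E0 E1 r s a b \<Longrightarrow> cng E0 E1 r s b a"
  unfolding cng_def using I_neg by fastforce

lemma cng_trans: "cng E0 E1 r s a b \<Longrightarrow> cng E0 E1 r s b c \<Longrightarrow> cng E0 E1 r s a c"
  unfolding cng_def using lp_ideal.add by fastforce

lemma cng_add: "cng E0 E1 r s a b \<Longrightarrow> cng E0 E1 r s c d \<Longrightarrow> cng E0 E1 r s (a + c) (b + d)"
proof -
  assume "cng E0 E1 r s a b" "cng E0 E1 r s c d"
  then have "(a - b) + (c - d) \<in> lp_ideal E0 E1 r s" unfolding cng_def by (rule lp_ideal.add)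
  moreover have "(a - b) + (c - d) = (a + c) - (b + d)" by (simp add: algebra_simps)
  ultimately show ?thesis by (simp add: cng_def)
qed

lemma cng_lmul: "cng E0 E1 r s a b \<Longrightarrow> cng E0 E1 r s (fmul x a) (fmul x b)"
  unfolding cng_def fmul_diff_right[symmetric] by (rule lp_ideal.left)

lemma cng_rmul: "cng E0 E1 r s a b \<Longrightarrow> cng E0 E1 r s (fmul a x) (fmul b x)"
  unfolding cng_def fmul_diff_left[symmetric] by (rule lp_ideal.right)

lemma cng_fsmult: "cng E0 E1 r s a b \<Longrightarrow> cng E0 E1 r s (fsmult c a) (fsmult c b)"
  unfolding fsmult_def by (rule cng_lmul)

lemma cng_sum: "(\<And>i. i \<in> A \<Longrightarrow> cng E0 E1 r s (f i) (g i)) \<Longrightarrow> cng E0 E1 r s (\<Sum>i\<in>A. f i) (\<Sum>i\<in>A. g i)"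
  by (induction A rule: infinite_finite_induct) (auto simp: cng_refl intro: cng_add)

lemma cng_ctx: "cng E0 E1 r s (mon u :: _ \<Rightarrow>\<^sub>0 'r::comm_ring_1) (mon u') \<Longrightarrow> a @ u @ b = W \<Longrightarrow> a @ u' @ b = W' \<Longrightarrow>
    cng E0 E1 r s (mon W :: _ \<Rightarrow>\<^sub>0 'r) (mon W')"
  unfolding mon_append[symmetric]
  by (metis cng_lmul cng_rmul mon_append)

lemma cng_ctx0: "cng E0 E1 r s (mon u :: _ \<Rightarrow>\<^sub>0 'r::comm_ring_1) 0 \<Longrightarrow> a @ u @ b = W \<Longrightarrow> cng E0 E1 r s (mon W :: _ \<Rightarrow>\<^sub>0 'r) 0"
proof -
  assume a: "cng E0 E1 r s (mon u :: _ \<Rightarrow>\<^sub>0 'r) 0" "a @ u @ b = W"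
  have "cng E0 E1 r s (fmul (mon a) (fmul (mon u) (mon b))) (fmul (mon a) (fmul 0 (mon b)) :: _ \<Rightarrow>\<^sub>0 'r)"
    by (rule cng_lmul, rule cng_rmul, rule a(1))
  then show ?thesis using a(2) by (simp add: mon_append[symmetric])
qed

fun wd :: "('v,'e) fpath \<Rightarrow> ('v,'e) gen list" where
  "wd (Inl v) = [P v]"
| "wd (Inr es) = map S es"

fun wds :: "('v,'e) fpath \<Rightarrow> ('v,'e) gen list" where
  "wds (Inl v) = [P v]"
| "wds (Inr es) = rev (map SS es)"

lemma spath_wd: "spath \<mu> = mon (wd \<mu>)" by (cases \<mu>) (auto simp: pv_def)
lemma spath_star_wds: "spath_star \<mu> = mon (wds \<mu>)" by (cases \<mu>) (auto simp: pv_def)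

lemma gen_mon: "fmul (spath \<mu>) (spath_star \<nu>) = mon (wd \<mu> @ wds \<nu>)"
  by (simp add: spath_wd spath_star_wds mon_append)

lemma path_ok_single: "path_ok E0 E1 r s (Inr [e]) \<longleftrightarrow> e \<in> E1" by simp

lemma path_ok_cons: "path_ok E0 E1 r s (Inr (e # fs)) \<longleftrightarrow>
   e \<in> E1 \<and> (fs = [] \<or> (path_ok E0 E1 r s (Inr fs) \<and> s e = r (hd fs)))"
proof
  assume a: "path_ok E0 E1 r s (Inr (e # fs))"
  then have H: "\<And>i. Suc i < Suc (length fs) \<Longrightarrow> s ((e # fs) ! i) = r ((e # fs) ! Suc i)" by simp
  show "e \<in> E1 \<and> (fs = [] \<or> (path_ok E0 E1 r s (Inr fs) \<and> s e = r (hd fs)))"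
  proof (cases fs)
    case Nil then show ?thesis using a by simp
  next
    case (Cons f fs')
    have "s (fs ! j) = r (fs ! Suc j)" if "Suc j < length fs" for j
      using H[of "Suc j"] that by simp
    moreover have "s e = r (hd fs)" using H[of 0] Cons by simp
    ultimately show ?thesis using a Cons by auto
  qed
next
  assume a: "e \<in> E1 \<and> (fs = [] \<or> (path_ok E0 E1 r s (Inr fs) \<and> s e = r (hd fs)))"
  show "path_ok E0 E1 r s (Inr (e # fs))"
  proof (cases fs)
    case Nil then show ?thesis using a by simp
  next
    case (Cons f fs')
    then have p: "path_ok E0 E1 r s (Inr fs)" "s e = r (hd fs)" using a by auto
    have "s ((e # fs) ! i) = r ((e # fs) ! Suc i)" if "Suc i < length (e # fs)" for i
    proof (cases i)
      case 0 then show ?thesis using p Cons by simp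
    next
      case (Suc j) then show ?thesis using p that by simp
    qed
    then show ?thesis using a p by auto
  qed
qed

lemma path_ok_snoc: "path_ok E0 E1 r s (Inr fs) \<Longrightarrow> e \<in> E1 \<Longrightarrow> s (last fs) = r e \<Longrightarrow>
   path_ok E0 E1 r s (Inr (fs @ [e]))"
proof (induction fs)
  case Nil then show ?case by simp
next
  case (Cons a fs)
  show ?case
  proof (cases "fs = []")
    case True then show ?thesis using Cons.prems by (simp add: path_ok_cons)
  next
    case False
    have "a \<in> E1 \<and> (fs = [] \<or> (path_ok E0 E1 r s (Inr fs) \<and> s a = r (hd fs)))"
      by (rule path_ok_cons[THEN iffD1, OF Cons.prems(1)])
    then have h: "a \<in> E1" "path_ok E0 E1 r s (Inr fs)" "s a = r (hd fs)" using False by auto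
    have "path_ok E0 E1 r s (Inr (fs @ [e]))" using Cons.IH h(2) Cons.prems(2,3) False by simp
    then have "path_ok E0 E1 r s (Inr (a # (fs @ [e])))"
      using h False by (intro path_ok_cons[THEN iffD2] conjI disjI2) simp_all
    then show ?thesis by simp
  qed
qed

lemma path_ok_tail: "path_ok E0 E1 r s (Inr (e # f # fs)) \<Longrightarrow> path_ok E0 E1 r s (Inr (f # fs)) \<and> s e = r f"
  by (simp only: path_ok_cons) simp

locale gctx =
  fixes E0 :: "'v set" and E1 :: "'e set" and r s :: "'e \<Rightarrow> 'v" and V :: "'v set"
  assumes rE0: "r ` E1 \<subseteq> E0" and sE0: "s ` E1 \<subseteq> E0" and VE0: "V \<subseteq> E0"
begin

lemma rE0': "e \<in> E1 \<Longrightarrow> r e \<in> E0" using rE0 by blast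
lemma sE0': "e \<in> E1 \<Longrightarrow> s e \<in> E0" using sE0 by blast

lemma R_PP: assumes "v \<in> E0" shows "cng E0 E1 r s (mon [P v, P v]) (mon [P v] :: _ \<Rightarrow>\<^sub>0 'r::comm_ring_1)"
proof -
  have "(fmul (pv v) (pv v) - pv v :: _ \<Rightarrow>\<^sub>0 'r) \<in> lp_ideal E0 E1 r s" using assms by (rule lp_ideal.idem)
  then show ?thesis using assms by (simp add: cng_def pv_def se_def ses_def fmul_mon1')
qed

lemma R_PPo: assumes "v \<in> E0" "w \<in> E0" "v \<noteq> w" shows "cng E0 E1 r s (mon [P v, P w] :: _ \<Rightarrow>\<^sub>0 'r::comm_ring_1) 0"
proof -
  have "(fmul (pv v) (pv w) :: _ \<Rightarrow>\<^sub>0 'r) \<in> lp_ideal E0 E1 r s" using assms by (rule lp_ideal.orth)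
  then show ?thesis using assms by (simp add: cng_def pv_def se_def ses_def fmul_mon1')
qed

lemma R_PS: assumes "e \<in> E1" shows "cng E0 E1 r s (mon [P (r e), S e]) (mon [S e] :: _ \<Rightarrow>\<^sub>0 'r::comm_ring_1)"
proof -
  have "(fmul (pv (r e)) (se e) - se e :: _ \<Rightarrow>\<^sub>0 'r) \<in> lp_ideal E0 E1 r s" using assms by (rule lp_ideal.rs)
  then show ?thesis using assms by (simp add: cng_def pv_def se_def ses_def fmul_mon1')
qed

lemma R_SP: assumes "e \<in> E1" shows "cng E0 E1 r s (mon [S e, P (s e)]) (mon [S e] :: _ \<Rightarrow>\<^sub>0 'r::comm_ring_1)"
proof -
  have "(fmul (se e) (pv (s e)) - se e :: _ \<Rightarrow>\<^sub>0 'r) \<in> lp_ideal E0 E1 r s" using assms by (rule lp_ideal.sr)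
  then show ?thesis using assms by (simp add: cng_def pv_def se_def ses_def fmul_mon1')
qed

lemma R_PSS: assumes "e \<in> E1" shows "cng E0 E1 r s (mon [P (s e), SS e]) (mon [SS e] :: _ \<Rightarrow>\<^sub>0 'r::comm_ring_1)"
proof -
  have "(fmul (pv (s e)) (ses e) - ses e :: _ \<Rightarrow>\<^sub>0 'r) \<in> lp_ideal E0 E1 r s" using assms by (rule lp_ideal.rss)
  then show ?thesis using assms by (simp add: cng_def pv_def se_def ses_def fmul_mon1')
qed

lemma R_SSP: assumes "e \<in> E1" shows "cng E0 E1 r s (mon [SS e, P (r e)]) (mon [SS e] :: _ \<Rightarrow>\<^sub>0 'r::comm_ring_1)"
proof -
  have "(fmul (ses e) (pv (r e)) - ses e :: _ \<Rightarrow>\<^sub>0 'r) \<in> lp_ideal E0 E1 r s" using assms by (rule lp_ideal.ssr)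
  then show ?thesis using assms by (simp add: cng_def pv_def se_def ses_def fmul_mon1')
qed

lemma R_SSS: assumes "e \<in> E1" shows "cng E0 E1 r s (mon [SS e, S e]) (mon [P (s e)] :: _ \<Rightarrow>\<^sub>0 'r::comm_ring_1)"
proof -
  have "(fmul (ses e) (se e) - (if e = e then pv (s e) else 0) :: _ \<Rightarrow>\<^sub>0 'r) \<in> lp_ideal E0 E1 r s" using assms assms by (rule lp_ideal.ck1)
  then show ?thesis using assms by (simp add: cng_def pv_def se_def ses_def fmul_mon1')
qed

lemma R_SSSo: assumes "e \<in> E1" "f \<in> E1" "e \<noteq> f" shows "cng E0 E1 r s (mon [SS e, S f] :: _ \<Rightarrow>\<^sub>0 'r::comm_ring_1) 0"
proof -
  have "(fmul (ses e) (se f) - (if e = f then pv (s e) else 0) :: _ \<Rightarrow>\<^sub>0 'r) \<in> lp_ideal E0 E1 r s" using assms(1,2) by (rule lp_ideal.ck1)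
  then show ?thesis using assms by (simp add: cng_def pv_def se_def ses_def fmul_mon1')
qed

lemma Z_PS: "v \<in> E0 \<Longrightarrow> e \<in> E1 \<Longrightarrow> v \<noteq> r e \<Longrightarrow> cng E0 E1 r s (mon [P v, S e] :: _ \<Rightarrow>\<^sub>0 'r::comm_ring_1) 0"
  by (rule cng_trans[OF cng_ctx[OF cng_sym[OF R_PS], of e "[P v]" "[]"] cng_ctx0[OF R_PPo, of v "r e" "[]" "[S e]"]])
     (auto simp: rE0')

lemma Z_SP: "v \<in> E0 \<Longrightarrow> e \<in> E1 \<Longrightarrow> v \<noteq> s e \<Longrightarrow> cng E0 E1 r s (mon [S e, P v] :: _ \<Rightarrow>\<^sub>0 'r::comm_ring_1) 0"
  by (rule cng_trans[OF cng_ctx[OF cng_sym[OF R_SP], of e "[]" "[P v]"] cng_ctx0[OF R_PPo, of "s e" v "[S e]" "[]"]])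
     (auto simp: sE0')

lemma Z_PSS: "v \<in> E0 \<Longrightarrow> e \<in> E1 \<Longrightarrow> v \<noteq> s e \<Longrightarrow> cng E0 E1 r s (mon [P v, SS e] :: _ \<Rightarrow>\<^sub>0 'r::comm_ring_1) 0"
  by (rule cng_trans[OF cng_ctx[OF cng_sym[OF R_PSS], of e "[P v]" "[]"] cng_ctx0[OF R_PPo, of v "s e" "[]" "[SS e]"]])
     (auto simp: sE0')

lemma Z_SSP: "v \<in> E0 \<Longrightarrow> e \<in> E1 \<Longrightarrow> v \<noteq> r e \<Longrightarrow> cng E0 E1 r s (mon [SS e, P v] :: _ \<Rightarrow>\<^sub>0 'r::comm_ring_1) 0"
  by (rule cng_trans[OF cng_ctx[OF cng_sym[OF R_SSP], of e "[]" "[P v]"] cng_ctx0[OF R_PPo, of "r e" v "[SS e]" "[]"]])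
     (auto simp: rE0')

lemma Z_SS: "e \<in> E1 \<Longrightarrow> f \<in> E1 \<Longrightarrow> s e \<noteq> r f \<Longrightarrow> cng E0 E1 r s (mon [S e, S f] :: _ \<Rightarrow>\<^sub>0 'r::comm_ring_1) 0"
  by (rule cng_trans[OF cng_ctx[OF cng_sym[OF R_SP], of e "[]" "[S f]"]
        cng_trans[OF cng_ctx[OF cng_sym[OF R_PS], of f "[S e, P (s e)]" "[]"] cng_ctx0[OF R_PPo, of "s e" "r f" "[S e]" "[S f]"]]])
     (auto simp: rE0' sE0')

lemma Z_SSSS: "e \<in> E1 \<Longrightarrow> f \<in> E1 \<Longrightarrow> r f \<noteq> s e \<Longrightarrow> cng E0 E1 r s (mon [SS f, SS e] :: _ \<Rightarrow>\<^sub>0 'r::comm_ring_1) 0"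
  by (rule cng_trans[OF cng_ctx[OF cng_sym[OF R_SSP], of f "[]" "[SS e]"]
        cng_trans[OF cng_ctx[OF cng_sym[OF R_PSS], of e "[SS f, P (r f)]" "[]"] cng_ctx0[OF R_PPo, of "r f" "s e" "[SS f]" "[SS e]"]]])
     (auto simp: rE0' sE0')

end


context gctx begin

definition LG :: "(('v,'e) gen list \<Rightarrow>\<^sub>0 'r::comm_ring_1) \<Rightarrow> bool" where
  "LG x \<longleftrightarrow> cng E0 E1 r s x 0 \<or> (\<exists>\<mu>' \<nu>'. path_ok E0 E1 r s \<mu>' \<and> path_ok E0 E1 r s \<nu>' \<and> prange r \<nu>' \<in> V
      \<and> cng E0 E1 r s x (mon (wd \<mu>' @ wds \<nu>')))"

definition RG :: "(('v,'e) gen list \<Rightarrow>\<^sub>0 'r::comm_ring_1) \<Rightarrow> bool" where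
  "RG x \<longleftrightarrow> cng E0 E1 r s x 0 \<or> (\<exists>\<mu>' \<nu>'. path_ok E0 E1 r s \<mu>' \<and> path_ok E0 E1 r s \<nu>' \<and> prange r \<mu>' \<in> V
      \<and> cng E0 E1 r s x (mon (wd \<mu>' @ wds \<nu>')))"

lemma LG_zero: "cng E0 E1 r s x 0 \<Longrightarrow> LG x" by (simp add: LG_def)
lemma LG_gen: "path_ok E0 E1 r s \<mu>' \<Longrightarrow> path_ok E0 E1 r s \<nu>' \<Longrightarrow> prange r \<nu>' \<in> V \<Longrightarrow>
   cng E0 E1 r s x (mon (wd \<mu>' @ wds \<nu>')) \<Longrightarrow> LG x" unfolding LG_def by blast
lemma RG_zero: "cng E0 E1 r s x 0 \<Longrightarrow> RG x" by (simp add: RG_def)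
lemma RG_gen: "path_ok E0 E1 r s \<mu>' \<Longrightarrow> prange r \<mu>' \<in> V \<Longrightarrow> path_ok E0 E1 r s \<nu>' \<Longrightarrow>
   cng E0 E1 r s x (mon (wd \<mu>' @ wds \<nu>')) \<Longrightarrow> RG x" unfolding RG_def by blast

lemma path_ok_E0: "path_ok E0 E1 r s (Inl v) \<longleftrightarrow> v \<in> E0" by simp

lemma L_step:
  assumes g: "gen_ok E0 E1 g" and mu: "path_ok E0 E1 r s \<mu>" and nu: "path_ok E0 E1 r s \<nu>" "prange r \<nu> \<in> V"
  shows "LG (mon (g # wd \<mu> @ wds \<nu>) :: _ \<Rightarrow>\<^sub>0 'r::comm_ring_1)"
proof (cases g)
  case (P v)
  then have v: "v \<in> E0" using g by (simp add: gen_ok_def)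
  show ?thesis
  proof (cases \<mu>)
    case (Inl u)
    then have u: "u \<in> E0" using mu by simp
    show ?thesis
    proof (cases "v = u")
      case True
      show ?thesis
        by (rule LG_gen[OF mu nu]) (rule cng_ctx[OF R_PP[OF u], of "[]" "wds \<nu>"]; simp add: P Inl True)
    next
      case False
      show ?thesis
        by (rule LG_zero) (rule cng_ctx0[OF R_PPo[OF v u False], of "[]" "wds \<nu>"]; simp add: P Inl)
    qed
  next
    case (Inr es)
    then obtain e es' where es: "es = e # es'" using mu by (cases es) auto
    then have e: "e \<in> E1" using mu Inr by simp
    show ?thesis
    proof (cases "v = r e")
      case True
      show ?thesis
        by (rule LG_gen[OF mu nu]) (rule cng_ctx[OF R_PS[OF e], of "[]" "map S es' @ wds \<nu>"]; simp add: P Inr es True)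
    next
      case False
      show ?thesis
        by (rule LG_zero) (rule cng_ctx0[OF Z_PS[OF v e False], of "[]" "map S es' @ wds \<nu>"]; simp add: P Inr es)
    qed
  qed
next
  case (S e)
  then have e: "e \<in> E1" using g by (simp add: gen_ok_def)
  show ?thesis
  proof (cases \<mu>)
    case (Inl u)
    then have u: "u \<in> E0" using mu by simp
    show ?thesis
    proof (cases "u = s e")
      case True
      have p: "path_ok E0 E1 r s (Inr [e])" using e by simp
      show ?thesis
        by (rule LG_gen[OF p nu]) (rule cng_ctx[OF R_SP[OF e], of "[]" "wds \<nu>"]; simp add: S Inl True)
    next
      case False
      show ?thesis
        by (rule LG_zero) (rule cng_ctx0[OF Z_SP[OF u e False], of "[]" "wds \<nu>"]; simp add: S Inl)
    qed
  next
    case (Inr es)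
    then obtain f es' where es: "es = f # es'" using mu by (cases es) auto
    then have f: "f \<in> E1" using mu Inr by simp
    show ?thesis
    proof (cases "s e = r f")
      case True
      have p: "path_ok E0 E1 r s (Inr (e # f # es'))"
        using e True mu Inr es by (subst path_ok_cons) simp
      show ?thesis
        by (rule LG_gen[OF p nu]) (simp add: S Inr es cng_refl)
    next
      case False
      show ?thesis
        by (rule LG_zero) (rule cng_ctx0[OF Z_SS[OF e f False], of "[]" "map S es' @ wds \<nu>"]; simp add: S Inr es)
    qed
  qed
next
  case (SS e)
  then have e: "e \<in> E1" using g by (simp add: gen_ok_def)
  show ?thesis
  proof (cases \<mu>)
    case (Inl u)
    then have u: "u \<in> E0" using mu by simp
    show ?thesis
    proof (cases "u = r e")
      case False
      show ?thesis
        by (rule LG_zero) (rule cng_ctx0[OF Z_SSP[OF u e False], of "[]" "wds \<nu>"]; simp add: SS Inl)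
    next
      case ure: True
      show ?thesis
      proof (cases \<nu>)
        case (Inl x)
        then have x: "x \<in> E0" using nu by simp
        show ?thesis
        proof (cases "u = x")
          case False
          show ?thesis
            by (rule LG_zero) (rule cng_ctx0[OF R_PPo[OF u x False], of "[SS e]" "[]"]; simp add: SS Inl \<open>\<mu> = Inl u\<close>)
        next
          case True
          have p1: "path_ok E0 E1 r s (Inl (s e))" using e sE0' by simp
          have p2: "path_ok E0 E1 r s (Inr [e])" using e by simp
          have pr: "prange r (Inr [e]) \<in> V" using nu Inl True ure by simp
          have c1: "cng E0 E1 r s (mon [SS e, P u, P u] :: _ \<Rightarrow>\<^sub>0 'r) (mon [SS e, P u])"
            by (rule cng_ctx[OF R_PP[OF u], of "[SS e]" "[]"]) simp_all
          have c2: "cng E0 E1 r s (mon [SS e, P u] :: _ \<Rightarrow>\<^sub>0 'r) (mon [P (s e), SS e])"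
            using cng_trans[OF R_SSP[OF e] cng_sym[OF R_PSS[OF e]]] ure by simp
          show ?thesis
            by (rule LG_gen[OF p1 p2 pr]) (use cng_trans[OF c1 c2] in \<open>simp add: SS Inl True \<open>\<mu> = Inl u\<close>\<close>)
        qed
      next
        case (Inr fs)
        then have fsne: "fs \<noteq> []" using nu by simp
        then obtain fs' f where fs: "fs = fs' @ [f]" by (cases fs rule: rev_exhaust) auto
        then have f: "f \<in> E1" using nu Inr by simp
        show ?thesis
        proof (cases "u = s f")
          case False
          show ?thesis
            by (rule LG_zero) (rule cng_ctx0[OF Z_PSS[OF u f False], of "[SS e]" "rev (map SS fs')"]; simp add: SS Inr fs \<open>\<mu> = Inl u\<close>)
        next
          case True
          have p1: "path_ok E0 E1 r s (Inl (s e))" using e sE0' by simp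
          have p2: "path_ok E0 E1 r s (Inr (fs @ [e]))"
            by (rule path_ok_snoc) (use nu Inr e fs True ure in auto)
          have pr: "prange r (Inr (fs @ [e])) \<in> V" using nu Inr fsne by simp
          have c1: "cng E0 E1 r s (mon ([SS e, P u, SS f] @ rev (map SS fs')) :: _ \<Rightarrow>\<^sub>0 'r) (mon ([SS e, SS f] @ rev (map SS fs')))"
            by (rule cng_ctx[OF R_PSS[OF f], of "[SS e]" "rev (map SS fs')"]) (simp_all add: True)
          have c2: "cng E0 E1 r s (mon ([SS e, SS f] @ rev (map SS fs')) :: _ \<Rightarrow>\<^sub>0 'r) (mon ([P (s e), SS e, SS f] @ rev (map SS fs')))"
            by (rule cng_ctx[OF cng_sym[OF R_PSS[OF e]], of "[]" "SS f # rev (map SS fs')"]) simp_all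
          show ?thesis
            by (rule LG_gen[OF p1 p2 pr]) (use cng_trans[OF c1 c2] in \<open>simp add: SS Inr fs \<open>\<mu> = Inl u\<close>\<close>)
        qed
      qed
    qed
  next
    case (Inr es)
    then obtain f es' where es: "es = f # es'" using mu by (cases es) auto
    then have f: "f \<in> E1" using mu Inr by simp
    show ?thesis
    proof (cases "e = f")
      case False
      show ?thesis
        by (rule LG_zero) (rule cng_ctx0[OF R_SSSo[OF e f False], of "[]" "map S es' @ wds \<nu>"]; simp add: SS Inr es)
    next
      case True
      have c1: "cng E0 E1 r s (mon (g # wd \<mu> @ wds \<nu>) :: _ \<Rightarrow>\<^sub>0 'r) (mon (P (s e) # map S es' @ wds \<nu>))"
        by (rule cng_ctx[OF R_SSS[OF e], of "[]" "map S es' @ wds \<nu>"]) (simp_all add: SS Inr es True)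
      show ?thesis
      proof (cases es')
        case Nil
        have p1: "path_ok E0 E1 r s (Inl (s e))" using e sE0' by simp
        show ?thesis by (rule LG_gen[OF p1 nu]) (use c1 Nil in simp)
      next
        case (Cons f2 es'')
        have pt: "path_ok E0 E1 r s (Inr (f2 # es''))" "s f = r f2"
          using path_ok_tail[where e=f and f=f2 and fs=es''] mu Inr es Cons by auto
        have f2: "f2 \<in> E1" using pt(1) by simp
        have c2: "cng E0 E1 r s (mon (P (s e) # map S es' @ wds \<nu>) :: _ \<Rightarrow>\<^sub>0 'r) (mon (map S es' @ wds \<nu>))"
          by (rule cng_ctx[OF R_PS[OF f2], of "[]" "map S es'' @ wds \<nu>"]) (simp_all add: Cons pt True)
        show ?thesis by (rule LG_gen[OF pt(1) nu]) (use cng_trans[OF c1 c2] Cons in simp)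
      qed
    qed
  qed
qed

end


context gctx begin

lemma R_step:
  assumes g: "gen_ok E0 E1 g" and mu: "path_ok E0 E1 r s \<mu>" "prange r \<mu> \<in> V" and nu: "path_ok E0 E1 r s \<nu>"
  shows "RG (mon (wd \<mu> @ wds \<nu> @ [g]) :: _ \<Rightarrow>\<^sub>0 'r::comm_ring_1)"
proof (cases g)
  case (P v)
  then have v: "v \<in> E0" using g by (simp add: gen_ok_def)
  show ?thesis
  proof (cases \<nu>)
    case (Inl x)
    then have x: "x \<in> E0" using nu by simp
    show ?thesis
    proof (cases "x = v")
      case True
      show ?thesis
        by (rule RG_gen[OF mu nu]) (rule cng_ctx[OF R_PP[OF x], of "wd \<mu>" "[]"]; simp add: P Inl True)
    next
      case False
      show ?thesis
        by (rule RG_zero) (rule cng_ctx0[OF R_PPo[OF x v False], of "wd \<mu>" "[]"]; simp add: P Inl)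
    qed
  next
    case (Inr fs)
    then obtain f fs' where fs: "fs = f # fs'" using nu by (cases fs) auto
    then have f: "f \<in> E1" using nu Inr by simp
    show ?thesis
    proof (cases "v = r f")
      case True
      show ?thesis
        by (rule RG_gen[OF mu nu]) (rule cng_ctx[OF R_SSP[OF f], of "wd \<mu> @ rev (map SS fs')" "[]"]; simp add: P Inr fs True)
    next
      case False
      show ?thesis
        by (rule RG_zero) (rule cng_ctx0[OF Z_SSP[OF v f False], of "wd \<mu> @ rev (map SS fs')" "[]"]; simp add: P Inr fs)
    qed
  qed
next
  case (S e)
  then have e: "e \<in> E1" using g by (simp add: gen_ok_def)
  show ?thesis
  proof (cases \<nu>)
    case (Inl x)
    then have x: "x \<in> E0" using nu by simp
    show ?thesis
    proof (cases "x = r e")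
      case False
      show ?thesis
        by (rule RG_zero) (rule cng_ctx0[OF Z_PS[OF x e False], of "wd \<mu>" "[]"]; simp add: S Inl)
    next
      case xre: True
      have c0: "cng E0 E1 r s (mon (wd \<mu> @ wds \<nu> @ [g]) :: _ \<Rightarrow>\<^sub>0 'r) (mon (wd \<mu> @ [S e]))"
        by (rule cng_ctx[OF R_PS[OF e], of "wd \<mu>" "[]"]) (simp_all add: S Inl xre)
      have pse: "path_ok E0 E1 r s (Inl (s e))" using e sE0' by simp
      show ?thesis
      proof (cases \<mu>)
        case (Inl u)
        then have u: "u \<in> E0" using mu by simp
        show ?thesis
        proof (cases "u = r e")
          case False
          have "cng E0 E1 r s (mon (wd \<mu> @ [S e]) :: _ \<Rightarrow>\<^sub>0 'r) 0"
            by (rule cng_ctx0[OF Z_PS[OF u e False], of "[]" "[]"]) (simp add: Inl)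
          then show ?thesis by (rule RG_zero[OF cng_trans[OF c0]])
        next
          case True
          have p1: "path_ok E0 E1 r s (Inr [e])" using e by simp
          have pr: "prange r (Inr [e]) \<in> V" using mu Inl True by simp
          have c1: "cng E0 E1 r s (mon (wd \<mu> @ [S e]) :: _ \<Rightarrow>\<^sub>0 'r) (mon [S e, P (s e)])"
            using cng_trans[OF R_PS[OF e] cng_sym[OF R_SP[OF e]]] Inl True by simp
          show ?thesis by (rule RG_gen[OF p1 pr pse]) (use cng_trans[OF c0 c1] in simp)
        qed
      next
        case (Inr es)
        then have esne: "es \<noteq> []" using mu by simp
        then obtain es' l where es: "es = es' @ [l]" by (cases es rule: rev_exhaust) auto
        then have l: "l \<in> E1" using mu Inr by simp
        show ?thesis
        proof (cases "s l = r e")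
          case False
          have "cng E0 E1 r s (mon (wd \<mu> @ [S e]) :: _ \<Rightarrow>\<^sub>0 'r) 0"
            by (rule cng_ctx0[OF Z_SS[OF l e False], of "map S es'" "[]"]) (simp add: Inr es)
          then show ?thesis by (rule RG_zero[OF cng_trans[OF c0]])
        next
          case True
          have p1: "path_ok E0 E1 r s (Inr (es @ [e]))"
            by (rule path_ok_snoc) (use mu Inr e es True in auto)
          have pr: "prange r (Inr (es @ [e])) \<in> V" using mu Inr esne by simp
          have c1: "cng E0 E1 r s (mon (wd \<mu> @ [S e]) :: _ \<Rightarrow>\<^sub>0 'r) (mon (map S es @ [S e, P (s e)]))"
            by (rule cng_ctx[OF cng_sym[OF R_SP[OF e]], of "map S es" "[]"]) (simp_all add: Inr)
          show ?thesis by (rule RG_gen[OF p1 pr pse]) (use cng_trans[OF c0 c1] in simp)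
        qed
      qed
    qed
  next
    case (Inr fs)
    then obtain f fs' where fs: "fs = f # fs'" using nu by (cases fs) auto
    then have f: "f \<in> E1" using nu Inr by simp
    show ?thesis
    proof (cases "f = e")
      case False
      show ?thesis
        by (rule RG_zero) (rule cng_ctx0[OF R_SSSo[OF f e False], of "wd \<mu> @ rev (map SS fs')" "[]"]; simp add: S Inr fs)
    next
      case True
      have c1: "cng E0 E1 r s (mon (wd \<mu> @ wds \<nu> @ [g]) :: _ \<Rightarrow>\<^sub>0 'r) (mon (wd \<mu> @ rev (map SS fs') @ [P (s e)]))"
        by (rule cng_ctx[OF R_SSS[OF e], of "wd \<mu> @ rev (map SS fs')" "[]"]) (simp_all add: S Inr fs True)
      show ?thesis
      proof (cases fs')
        case Nil
        have p1: "path_ok E0 E1 r s (Inl (s e))" using e sE0' by simp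
        show ?thesis by (rule RG_gen[OF mu p1]) (use c1 Nil in simp)
      next
        case (Cons f2 fs'')
        have pt: "path_ok E0 E1 r s (Inr (f2 # fs''))" "s f = r f2"
          using path_ok_tail[where e=f and f=f2 and fs=fs''] nu Inr fs Cons by auto
        have f2: "f2 \<in> E1" using pt(1) by simp
        have sef2: "r f2 = s e" using pt True by simp
        have c2: "cng E0 E1 r s (mon (wd \<mu> @ rev (map SS fs') @ [P (s e)]) :: _ \<Rightarrow>\<^sub>0 'r) (mon (wd \<mu> @ rev (map SS fs')))"
          by (rule cng_ctx[OF R_SSP[OF f2], of "wd \<mu> @ rev (map SS fs'')" "[]"]) (simp_all add: Cons sef2)
        show ?thesis by (rule RG_gen[OF mu pt(1)]) (use cng_trans[OF c1 c2] Cons in simp)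
      qed
    qed
  qed
next
  case (SS e)
  then have e: "e \<in> E1" using g by (simp add: gen_ok_def)
  show ?thesis
  proof (cases \<nu>)
    case (Inl x)
    then have x: "x \<in> E0" using nu by simp
    show ?thesis
    proof (cases "x = s e")
      case False
      show ?thesis
        by (rule RG_zero) (rule cng_ctx0[OF Z_PSS[OF x e False], of "wd \<mu>" "[]"]; simp add: SS Inl)
    next
      case True
      have p1: "path_ok E0 E1 r s (Inr [e])" using e by simp
      show ?thesis
        by (rule RG_gen[OF mu p1]) (rule cng_ctx[OF R_PSS[OF e], of "wd \<mu>" "[]"]; simp add: SS Inl True)
    qed
  next
    case (Inr fs)
    then obtain f fs' where fs: "fs = f # fs'" using nu by (cases fs) auto
    then have f: "f \<in> E1" using nu Inr by simp
    show ?thesis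
    proof (cases "r f = s e")
      case False
      show ?thesis
        by (rule RG_zero) (rule cng_ctx0[OF Z_SSSS[OF e f False], of "wd \<mu> @ rev (map SS fs')" "[]"]; simp add: SS Inr fs)
    next
      case True
      have p1: "path_ok E0 E1 r s (Inr (e # f # fs'))"
        using e True nu Inr fs by (subst path_ok_cons) simp
      show ?thesis
        by (rule RG_gen[OF mu p1]) (simp add: SS Inr fs cng_refl)
    qed
  qed
qed

lemma mon_cons: "mon (g # w) = fmul (mon [g]) (mon w)"
  using mon_append[of "[g]" w] by simp

lemma Mst_left:
  assumes "n \<in> Mstar_space E0 E1 r s V" "gen_ok E0 E1 g"
  shows "\<exists>n'\<in>Mstar_space E0 E1 r s V. cng E0 E1 r s (fmul (mon [g]) n) (n' :: _ \<Rightarrow>\<^sub>0 'r::comm_ring_1)"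
  using assms(1) unfolding Mstar_space_def
proof (induction rule: rspan.induct)
  case zero then show ?case by (rule bexI[OF _ rspan.zero]) (simp add: cng_refl)
next
  case (base x)
  then obtain \<mu> \<nu> where x: "x = fmul (spath \<mu>) (spath_star \<nu>)" and c: "path_ok E0 E1 r s \<mu>"
    "path_ok E0 E1 r s \<nu>" "prange r \<nu> \<in> V" by blast
  have eq: "fmul (mon [g]) x = (mon (g # wd \<mu> @ wds \<nu>) :: _ \<Rightarrow>\<^sub>0 'r)"
    unfolding x gen_mon by (rule mon_cons[symmetric])
  have "LG (mon (g # wd \<mu> @ wds \<nu>) :: _ \<Rightarrow>\<^sub>0 'r)" by (rule L_step[OF assms(2) c])
  then have "\<exists>m'\<in>rspan {fmul (spath \<mu>) (spath_star \<nu>) |\<mu> \<nu>.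
        path_ok E0 E1 r s \<mu> \<and> path_ok E0 E1 r s \<nu> \<and> prange r \<nu> \<in> V}.
        cng E0 E1 r s (mon (g # wd \<mu> @ wds \<nu>) :: _ \<Rightarrow>\<^sub>0 'r) m'" unfolding LG_def
  proof
    assume "cng E0 E1 r s (mon (g # wd \<mu> @ wds \<nu>) :: _ \<Rightarrow>\<^sub>0 'r) 0"
    then show ?thesis by (rule bexI[OF _ rspan.zero])
  next
    assume "\<exists>\<mu>' \<nu>'. path_ok E0 E1 r s \<mu>' \<and> path_ok E0 E1 r s \<nu>' \<and> prange r \<nu>' \<in> V \<and>
       cng E0 E1 r s (mon (g # wd \<mu> @ wds \<nu>) :: _ \<Rightarrow>\<^sub>0 'r) (mon (wd \<mu>' @ wds \<nu>'))"
    then obtain \<mu>' \<nu>' where h: "path_ok E0 E1 r s \<mu>'" "path_ok E0 E1 r s \<nu>'" "prange r \<nu>' \<in> V"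
       "cng E0 E1 r s (mon (g # wd \<mu> @ wds \<nu>) :: _ \<Rightarrow>\<^sub>0 'r) (mon (wd \<mu>' @ wds \<nu>'))" by blast
    have "mon (wd \<mu>' @ wds \<nu>') \<in> rspan {fmul (spath \<mu>) (spath_star \<nu>) |\<mu> \<nu>.
        path_ok E0 E1 r s \<mu> \<and> path_ok E0 E1 r s \<nu> \<and> prange r \<nu> \<in> V}"
      by (rule rspan.base) (use h in \<open>auto simp: gen_mon\<close>)
    with h(4) show ?thesis by (rule bexI)
  qed
  then show ?case by (simp only: eq)
next
  case (add a b)
  then obtain a' b' where "a' \<in> rspan {fmul (spath \<mu>) (spath_star \<nu>) |\<mu> \<nu>.
        path_ok E0 E1 r s \<mu> \<and> path_ok E0 E1 r s \<nu> \<and> prange r \<nu> \<in> V}"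
     "b' \<in> rspan {fmul (spath \<mu>) (spath_star \<nu>) |\<mu> \<nu>.
        path_ok E0 E1 r s \<mu> \<and> path_ok E0 E1 r s \<nu> \<and> prange r \<nu> \<in> V}"
     "cng E0 E1 r s (fmul (mon [g]) a) a'" "cng E0 E1 r s (fmul (mon [g]) b) b'" by blast
  then show ?case unfolding fmul_add_right by (intro bexI[of _ "a' + b'"] cng_add rspan.add)
next
  case (smult a c)
  then obtain a' where "a' \<in> rspan {fmul (spath \<mu>) (spath_star \<nu>) |\<mu> \<nu>.
        path_ok E0 E1 r s \<mu> \<and> path_ok E0 E1 r s \<nu> \<and> prange r \<nu> \<in> V}"
     "cng E0 E1 r s (fmul (mon [g]) a) a'" by blast
  then show ?case unfolding fmul_fsmult_comm by (intro bexI[of _ "fsmult c a'"] cng_fsmult rspan.smult)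
qed

lemma M_right:
  assumes "m \<in> Mspace E0 E1 r s V" "gen_ok E0 E1 g"
  shows "\<exists>m'\<in>Mspace E0 E1 r s V. cng E0 E1 r s (fmul m (mon [g])) (m' :: _ \<Rightarrow>\<^sub>0 'r::comm_ring_1)"
  using assms(1) unfolding Mspace_def
proof (induction rule: rspan.induct)
  case zero then show ?case by (rule bexI[OF _ rspan.zero]) (simp add: cng_refl)
next
  case (base x)
  then obtain \<mu> \<nu> where x: "x = fmul (spath \<mu>) (spath_star \<nu>)" and c: "path_ok E0 E1 r s \<mu>"
    "prange r \<mu> \<in> V" "path_ok E0 E1 r s \<nu>" by blast
  have eq: "fmul x (mon [g]) = (mon (wd \<mu> @ wds \<nu> @ [g]) :: _ \<Rightarrow>\<^sub>0 'r)"
    by (simp add: x gen_mon mon_append fmul_assoc)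
  have "RG (mon (wd \<mu> @ wds \<nu> @ [g]) :: _ \<Rightarrow>\<^sub>0 'r)" by (rule R_step[OF assms(2) c])
  then have "\<exists>m'\<in>rspan {fmul (spath \<mu>) (spath_star \<nu>) |\<mu> \<nu>.
        path_ok E0 E1 r s \<mu> \<and> path_ok E0 E1 r s \<nu> \<and> prange r \<mu> \<in> V}.
        cng E0 E1 r s (mon (wd \<mu> @ wds \<nu> @ [g]) :: _ \<Rightarrow>\<^sub>0 'r) m'" unfolding RG_def
  proof
    assume "cng E0 E1 r s (mon (wd \<mu> @ wds \<nu> @ [g]) :: _ \<Rightarrow>\<^sub>0 'r) 0"
    then show ?thesis by (rule bexI[OF _ rspan.zero])
  next
    assume "\<exists>\<mu>' \<nu>'. path_ok E0 E1 r s \<mu>' \<and> path_ok E0 E1 r s \<nu>' \<and> prange r \<mu>' \<in> V \<and>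
       cng E0 E1 r s (mon (wd \<mu> @ wds \<nu> @ [g]) :: _ \<Rightarrow>\<^sub>0 'r) (mon (wd \<mu>' @ wds \<nu>'))"
    then obtain \<mu>' \<nu>' where h: "path_ok E0 E1 r s \<mu>'" "path_ok E0 E1 r s \<nu>'" "prange r \<mu>' \<in> V"
       "cng E0 E1 r s (mon (wd \<mu> @ wds \<nu> @ [g]) :: _ \<Rightarrow>\<^sub>0 'r) (mon (wd \<mu>' @ wds \<nu>'))" by blast
    have "mon (wd \<mu>' @ wds \<nu>') \<in> rspan {fmul (spath \<mu>) (spath_star \<nu>) |\<mu> \<nu>.
        path_ok E0 E1 r s \<mu> \<and> path_ok E0 E1 r s \<nu> \<and> prange r \<mu> \<in> V}"
      by (rule rspan.base) (use h in \<open>auto simp: gen_mon\<close>)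
    with h(4) show ?thesis by (rule bexI)
  qed
  then show ?case by (simp only: eq)
next
  case (add a b)
  then obtain a' b' where "a' \<in> rspan {fmul (spath \<mu>) (spath_star \<nu>) |\<mu> \<nu>.
        path_ok E0 E1 r s \<mu> \<and> path_ok E0 E1 r s \<nu> \<and> prange r \<mu> \<in> V}"
     "b' \<in> rspan {fmul (spath \<mu>) (spath_star \<nu>) |\<mu> \<nu>.
        path_ok E0 E1 r s \<mu> \<and> path_ok E0 E1 r s \<nu> \<and> prange r \<mu> \<in> V}"
     "cng E0 E1 r s (fmul a (mon [g])) a'" "cng E0 E1 r s (fmul b (mon [g])) b'" by blast
  then show ?case unfolding fmul_add_left by (intro bexI[of _ "a' + b'"] cng_add rspan.add)
next
  case (smult a c)
  then obtain a' where "a' \<in> rspan {fmul (spath \<mu>) (spath_star \<nu>) |\<mu> \<nu>.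
        path_ok E0 E1 r s \<mu> \<and> path_ok E0 E1 r s \<nu> \<and> prange r \<mu> \<in> V}"
     "cng E0 E1 r s (fmul a (mon [g])) a'" by blast
  then show ?case unfolding fmul_fsmult_left by (intro bexI[of _ "fsmult c a'"] cng_fsmult rspan.smult)
qed

end


lemma ne_pred: "{e\<in>A. Q e} \<noteq> {} \<Longrightarrow> (\<lambda>e. e \<in> A \<and> Q e) \<noteq> (\<lambda>x. x \<in> {})"
  unfolding fun_eq_iff by auto

context gctx begin

definition JJ :: "(('v,'e) gen list \<Rightarrow>\<^sub>0 'r::comm_ring_1) \<Rightarrow> bool" where
  "JJ x \<longleftrightarrow> (\<exists>y\<in>MstarM E0 E1 r s V. cng E0 E1 r s x y)"

lemma MstarM_left:
  assumes "y \<in> MstarM E0 E1 r s V" "gen_ok E0 E1 g"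
  shows "\<exists>y'\<in>MstarM E0 E1 r s V. cng E0 E1 r s (fmul (mon [g]) y) (y' :: _ \<Rightarrow>\<^sub>0 'r::comm_ring_1)"
  using assms(1) unfolding MstarM_def
proof (induction rule: rspan.induct)
  case zero then show ?case by (rule bexI[OF _ rspan.zero]) (simp add: cng_refl)
next
  case (base x)
  then obtain n m where x: "x = fmul n m" and nm: "n \<in> Mstar_space E0 E1 r s V" "m \<in> Mspace E0 E1 r s V" by blast
  obtain n' where n': "n' \<in> Mstar_space E0 E1 r s V" "cng E0 E1 r s (fmul (mon [g]) n) n'"
    using Mst_left[OF nm(1) assms(2)] by blast
  have "fmul n' m \<in> rspan {fmul n m |n m. n \<in> Mstar_space E0 E1 r s V \<and> m \<in> Mspace E0 E1 r s V}"
    by (rule rspan.base) (use n' nm in blast)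
  moreover have "cng E0 E1 r s (fmul (mon [g]) x) (fmul n' m)"
    unfolding x fmul_assoc[symmetric] by (rule cng_rmul[OF n'(2)])
  ultimately show ?case by blast
next
  case (add a b)
  then obtain a' b' where "a' \<in> rspan {fmul n m |n m. n \<in> Mstar_space E0 E1 r s V \<and> m \<in> Mspace E0 E1 r s V}"
     "b' \<in> rspan {fmul n m |n m. n \<in> Mstar_space E0 E1 r s V \<and> m \<in> Mspace E0 E1 r s V}"
     "cng E0 E1 r s (fmul (mon [g]) a) a'" "cng E0 E1 r s (fmul (mon [g]) b) b'" by blast
  then show ?case unfolding fmul_add_right by (intro bexI[of _ "a' + b'"] cng_add rspan.add)
next
  case (smult a c)
  then obtain a' where "a' \<in> rspan {fmul n m |n m. n \<in> Mstar_space E0 E1 r s V \<and> m \<in> Mspace E0 E1 r s V}"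
     "cng E0 E1 r s (fmul (mon [g]) a) a'" by blast
  then show ?case unfolding fmul_fsmult_comm by (intro bexI[of _ "fsmult c a'"] cng_fsmult rspan.smult)
qed

lemma MstarM_right:
  assumes "y \<in> MstarM E0 E1 r s V" "gen_ok E0 E1 g"
  shows "\<exists>y'\<in>MstarM E0 E1 r s V. cng E0 E1 r s (fmul y (mon [g])) (y' :: _ \<Rightarrow>\<^sub>0 'r::comm_ring_1)"
  using assms(1) unfolding MstarM_def
proof (induction rule: rspan.induct)
  case zero then show ?case by (rule bexI[OF _ rspan.zero]) (simp add: cng_refl)
next
  case (base x)
  then obtain n m where x: "x = fmul n m" and nm: "n \<in> Mstar_space E0 E1 r s V" "m \<in> Mspace E0 E1 r s V" by blast
  obtain m' where m': "m' \<in> Mspace E0 E1 r s V" "cng E0 E1 r s (fmul m (mon [g])) m'"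
    using M_right[OF nm(2) assms(2)] by blast
  have "fmul n m' \<in> rspan {fmul n m |n m. n \<in> Mstar_space E0 E1 r s V \<and> m \<in> Mspace E0 E1 r s V}"
    by (rule rspan.base) (use m' nm in blast)
  moreover have "cng E0 E1 r s (fmul x (mon [g])) (fmul n m')"
    unfolding x fmul_assoc by (rule cng_lmul[OF m'(2)])
  ultimately show ?case by blast
next
  case (add a b)
  then obtain a' b' where "a' \<in> rspan {fmul n m |n m. n \<in> Mstar_space E0 E1 r s V \<and> m \<in> Mspace E0 E1 r s V}"
     "b' \<in> rspan {fmul n m |n m. n \<in> Mstar_space E0 E1 r s V \<and> m \<in> Mspace E0 E1 r s V}"
     "cng E0 E1 r s (fmul a (mon [g])) a'" "cng E0 E1 r s (fmul b (mon [g])) b'" by blast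
  then show ?case unfolding fmul_add_left by (intro bexI[of _ "a' + b'"] cng_add rspan.add)
next
  case (smult a c)
  then obtain a' where "a' \<in> rspan {fmul n m |n m. n \<in> Mstar_space E0 E1 r s V \<and> m \<in> Mspace E0 E1 r s V}"
     "cng E0 E1 r s (fmul a (mon [g])) a'" by blast
  then show ?case unfolding fmul_fsmult_left by (intro bexI[of _ "fsmult c a'"] cng_fsmult rspan.smult)
qed

lemma J_left: "JJ x \<Longrightarrow> gen_ok E0 E1 g \<Longrightarrow> JJ (fmul (mon [g]) x)"
proof -
  assume "JJ x" "gen_ok E0 E1 g"
  then obtain y where y: "y \<in> MstarM E0 E1 r s V" "cng E0 E1 r s x y" unfolding JJ_def by blast
  obtain y' where y': "y' \<in> MstarM E0 E1 r s V" "cng E0 E1 r s (fmul (mon [g]) y) y'"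
    using MstarM_left[OF y(1) \<open>gen_ok E0 E1 g\<close>] by blast
  show ?thesis unfolding JJ_def using cng_trans[OF cng_lmul[OF y(2)] y'(2)] y'(1) by blast
qed

lemma J_right: "JJ x \<Longrightarrow> gen_ok E0 E1 g \<Longrightarrow> JJ (fmul x (mon [g]))"
proof -
  assume "JJ x" "gen_ok E0 E1 g"
  then obtain y where y: "y \<in> MstarM E0 E1 r s V" "cng E0 E1 r s x y" unfolding JJ_def by blast
  obtain y' where y': "y' \<in> MstarM E0 E1 r s V" "cng E0 E1 r s (fmul y (mon [g])) y'"
    using MstarM_right[OF y(1) \<open>gen_ok E0 E1 g\<close>] by blast
  show ?thesis unfolding JJ_def using cng_trans[OF cng_rmul[OF y(2)] y'(2)] y'(1) by blast
qed

lemma J_cong: assumes "cng E0 E1 r s x x'" "JJ x'" shows "JJ x"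
proof -
  obtain y where y: "y \<in> MstarM E0 E1 r s V" "cng E0 E1 r s x' y" using assms(2) unfolding JJ_def by blast
  show ?thesis unfolding JJ_def using cng_trans[OF assms(1) y(2)] y(1) by blast
qed

lemma J_add: "JJ x \<Longrightarrow> JJ x' \<Longrightarrow> JJ (x + x')"
proof -
  assume "JJ x" "JJ x'"
  then obtain y y' where "y \<in> MstarM E0 E1 r s V" "cng E0 E1 r s x y" "y' \<in> MstarM E0 E1 r s V" "cng E0 E1 r s x' y'"
    unfolding JJ_def by blast
  then show ?thesis unfolding JJ_def MstarM_def by (intro bexI[of _ "y + y'"] cng_add rspan.add)
qed

lemma J_zero: "JJ 0"
  unfolding JJ_def MstarM_def by (rule bexI[OF _ rspan.zero]) (simp add: cng_refl)

lemma J_fsmult: "JJ x \<Longrightarrow> JJ (fsmult c x)"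
proof -
  assume "JJ x"
  then obtain y where "y \<in> MstarM E0 E1 r s V" "cng E0 E1 r s x y" unfolding JJ_def by blast
  then show ?thesis unfolding JJ_def MstarM_def by (intro bexI[of _ "fsmult c y"] cng_fsmult rspan.smult)
qed

lemma J_sum: "(\<And>i. i \<in> A \<Longrightarrow> JJ (f i)) \<Longrightarrow> JJ (\<Sum>i\<in>A. f i)"
  by (induction A rule: infinite_finite_induct) (auto intro: J_add J_zero)

lemma J_left_word: "(\<forall>g\<in>set w. gen_ok E0 E1 g) \<Longrightarrow> JJ x \<Longrightarrow> JJ (fmul (mon w) x)"
proof (induction w)
  case Nil then show ?case by (simp add: mon_nil fmul_one_left)
next
  case (Cons g w)
  have "JJ (fmul (mon [g]) (fmul (mon w) x))" using Cons by (intro J_left) auto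
  then show ?case by (simp only: mon_cons[of g w] fmul_assoc)
qed

lemma J_V: assumes "v \<in> V" shows "JJ (pv v :: _ \<Rightarrow>\<^sub>0 'r::comm_ring_1)"
proof -
  have v: "v \<in> E0" using assms VE0 by blast
  let ?n = "fmul (spath (Inl v)) (spath_star (Inl v)) :: _ \<Rightarrow>\<^sub>0 'r"
  have n1: "?n \<in> Mstar_space E0 E1 r s V" unfolding Mstar_space_def
    by (rule rspan.base, rule CollectI, rule exI[of _ "Inl v"], rule exI[of _ "Inl v"]) (use v assms in simp)
  have n2: "?n \<in> Mspace E0 E1 r s V" unfolding Mspace_def
    by (rule rspan.base, rule CollectI, rule exI[of _ "Inl v"], rule exI[of _ "Inl v"]) (use v assms in simp)
  have y: "fmul ?n ?n \<in> MstarM E0 E1 r s V" unfolding MstarM_def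
    by (rule rspan.base) (use n1 n2 in blast)
  have eqy: "fmul ?n ?n = (mon [P v, P v, P v, P v] :: _ \<Rightarrow>\<^sub>0 'r)"
    unfolding gen_mon by (simp add: mon_append[symmetric])
  have c1: "cng E0 E1 r s (mon [P v, P v, P v, P v] :: _ \<Rightarrow>\<^sub>0 'r) (mon [P v, P v, P v])"
    by (rule cng_ctx[OF R_PP[OF v], of "[P v, P v]" "[]"]) simp_all
  have c2: "cng E0 E1 r s (mon [P v, P v, P v] :: _ \<Rightarrow>\<^sub>0 'r) (mon [P v, P v])"
    by (rule cng_ctx[OF R_PP[OF v], of "[P v]" "[]"]) simp_all
  have c3: "cng E0 E1 r s (pv v :: _ \<Rightarrow>\<^sub>0 'r) (fmul ?n ?n)"
    unfolding eqy pv_def by (rule cng_sym[OF cng_trans[OF c1 cng_trans[OF c2 R_PP[OF v]]]])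
  show ?thesis unfolding JJ_def using y c3 by blast
qed

lemma J_edge:
  assumes e: "e \<in> E1" and b: "JJ (pv (r e) :: _ \<Rightarrow>\<^sub>0 'r::comm_ring_1)"
  shows "JJ (pv (s e) :: _ \<Rightarrow>\<^sub>0 'r)"
proof -
  have g1: "gen_ok E0 E1 (SS e)" "gen_ok E0 E1 (S e)" using e by (auto simp: gen_ok_def)
  have j: "JJ (fmul (mon [SS e]) (fmul (pv (r e)) (mon [S e])) :: _ \<Rightarrow>\<^sub>0 'r)"
    by (rule J_left[OF J_right[OF b g1(2)] g1(1)])
  have eq: "fmul (mon [SS e]) (fmul (pv (r e)) (mon [S e])) = (mon [SS e, P (r e), S e] :: _ \<Rightarrow>\<^sub>0 'r)"
    by (simp add: pv_def mon_append[symmetric])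
  have c3: "cng E0 E1 r s (mon [P (s e)] :: _ \<Rightarrow>\<^sub>0 'r) (mon [SS e, P (r e), S e])"
    by (rule cng_trans[OF cng_sym[OF R_SSS[OF e]] cng_ctx[OF cng_sym[OF R_PS[OF e]], of "[SS e]" "[]"]]) simp_all
  have "JJ (mon [SS e, P (r e), S e] :: _ \<Rightarrow>\<^sub>0 'r)" using j unfolding eq .
  then show ?thesis unfolding pv_def by (rule J_cong[OF c3])
qed

lemma J_path: "path_ok E0 E1 r s (Inr es) \<Longrightarrow> JJ (pv (r (hd es)) :: _ \<Rightarrow>\<^sub>0 'r::comm_ring_1) \<Longrightarrow> JJ (pv (s (last es)) :: _ \<Rightarrow>\<^sub>0 'r)"
proof (induction es)
  case Nil then show ?case by simp
next
  case (Cons e es)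
  have e: "e \<in> E1" using Cons.prems(1) by simp
  have je: "JJ (pv (s e) :: _ \<Rightarrow>\<^sub>0 'r)" using J_edge[OF e] Cons.prems(2) by simp
  show ?case
  proof (cases "es = []")
    case True then show ?thesis using je by simp
  next
    case False
    have "e \<in> E1 \<and> (es = [] \<or> (path_ok E0 E1 r s (Inr es) \<and> s e = r (hd es)))"
      by (rule path_ok_cons[THEN iffD1, OF Cons.prems(1)])
    then have "path_ok E0 E1 r s (Inr es)" "s e = r (hd es)" using False by auto
    then have "JJ (pv (s (last es)) :: _ \<Rightarrow>\<^sub>0 'r)" using Cons.IH je by simp
    then show ?thesis using False by simp
  qed
qed

lemma K_SigmaH: "SigmaH E0 E1 r s V \<subseteq> {b \<in> E0. JJ (pv b :: _ \<Rightarrow>\<^sub>0 'r::comm_ring_1)}"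
proof -
  let ?K = "{b \<in> E0. JJ (pv b :: _ \<Rightarrow>\<^sub>0 'r)}"
  have her: "hereditary E0 E1 r s ?K" unfolding hereditary_def
  proof (intro ballI allI impI)
    fix b w assume b: "b \<in> ?K" and p: "path_le E0 E1 r s b w"
    then obtain \<mu> where mu: "path_ok E0 E1 r s \<mu>" "prange r \<mu> = b" "psource s \<mu> = w"
      unfolding path_le_def by blast
    show "w \<in> ?K"
    proof (cases \<mu>)
      case (Inl v) then show ?thesis using mu b by simp
    next
      case (Inr es)
      then have "es \<noteq> []" "set es \<subseteq> E1" using mu by auto
      then have "last es \<in> E1" using last_in_set by blast
      then have "w \<in> E0" using mu Inr sE0'[OF \<open>last es \<in> E1\<close>] by simp
      moreover have "JJ (pv (s (last es)) :: _ \<Rightarrow>\<^sub>0 'r)"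
      proof (rule J_path)
        show "path_ok E0 E1 r s (Inr es)" using mu(1) Inr by simp
        show "JJ (pv (r (hd es)) :: _ \<Rightarrow>\<^sub>0 'r)" using mu(2) Inr b by simp
      qed
      then have "JJ (pv w :: _ \<Rightarrow>\<^sub>0 'r)" using mu(3) Inr by simp
      ultimately show ?thesis by simp
    qed
  qed
  have sat: "saturated E0 E1 r s ?K" unfolding saturated_def
  proof (intro ballI impI)
    fix v assume v: "v \<in> E0" and c: "{e \<in> E1. r e = v} \<noteq> {} \<and> finite {e \<in> E1. r e = v} \<and> s ` {e \<in> E1. r e = v} \<subseteq> ?K"
    let ?A = "{e \<in> E1. r e = v}"
    have "(pv v - (\<Sum>e\<in>?A. fmul (se e) (ses e)) :: _ \<Rightarrow>\<^sub>0 'r) \<in> lp_ideal E0 E1 r s"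
    proof -
      have ne: "(\<lambda>e. e \<in> E1 \<and> r e = v) \<noteq> (\<lambda>x. x \<in> {})"
        using conjunct1[OF c] by (rule ne_pred)
      have fin: "finite ?A" using c by (rule conjunct1[OF conjunct2])
      show ?thesis by (rule lp_ideal.ck2[OF v ne fin])
    qed
    then have c0: "cng E0 E1 r s (pv v :: _ \<Rightarrow>\<^sub>0 'r) (\<Sum>e\<in>?A. fmul (se e) (ses e))" unfolding cng_def .
    have "JJ (fmul (se e) (ses e) :: _ \<Rightarrow>\<^sub>0 'r)" if "e \<in> ?A" for e
    proof -
      have e: "e \<in> E1" using that by simp
      have g1: "gen_ok E0 E1 (SS e)" "gen_ok E0 E1 (S e)" using e by (auto simp: gen_ok_def)
      have "s e \<in> ?K" using conjunct2[OF conjunct2[OF c]] that by (rule subsetD[OF _ imageI])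
      then have "JJ (pv (s e) :: _ \<Rightarrow>\<^sub>0 'r)" by simp
      then have "JJ (fmul (mon [S e]) (fmul (pv (s e)) (mon [SS e])) :: _ \<Rightarrow>\<^sub>0 'r)"
        by (intro J_left J_right g1)
      moreover have "fmul (mon [S e]) (fmul (pv (s e)) (mon [SS e])) = (mon [S e, P (s e), SS e] :: _ \<Rightarrow>\<^sub>0 'r)"
        by (simp add: pv_def mon_append[symmetric])
      ultimately have j: "JJ (mon [S e, P (s e), SS e] :: _ \<Rightarrow>\<^sub>0 'r)" by simp
      have "cng E0 E1 r s (mon [S e, SS e] :: _ \<Rightarrow>\<^sub>0 'r) (mon [S e, P (s e), SS e])"
        by (rule cng_ctx[OF cng_sym[OF R_SP[OF e]], of "[]" "[SS e]"]) simp_all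
      then have "JJ (mon [S e, SS e] :: _ \<Rightarrow>\<^sub>0 'r)" using j by (rule J_cong)
      then show ?thesis unfolding se_def ses_def fmul_mon1' .
    qed
    then have "JJ (\<Sum>e\<in>?A. fmul (se e) (ses e) :: _ \<Rightarrow>\<^sub>0 'r)" by (rule J_sum)
    then show "v \<in> ?K" using v J_cong[OF c0] by simp
  qed
  have "?K \<in> {H. H \<subseteq> E0 \<and> V \<subseteq> H \<and> hereditary E0 E1 r s H \<and> saturated E0 E1 r s H}"
  proof -
    have VK: "V \<subseteq> ?K" using J_V VE0 by auto
    show ?thesis by (intro CollectI conjI her sat VK) auto
  qed
  then show ?thesis unfolding SigmaH_def by (rule Inter_lower)
qed

fun tg :: "('v,'e) gen \<Rightarrow> 'v" where
  "tg (P v) = v" | "tg (S e) = s e" | "tg (SS e) = r e"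

lemma J_word:
  assumes all: "\<forall>b\<in>E0. JJ (pv b :: _ \<Rightarrow>\<^sub>0 'r::comm_ring_1)" and w: "w \<noteq> []" "\<forall>g\<in>set w. gen_ok E0 E1 g"
  shows "JJ (mon w :: _ \<Rightarrow>\<^sub>0 'r)"
proof -
  obtain w' g where wg: "w = w' @ [g]" using w(1) by (cases w rule: rev_exhaust) auto
  have g: "gen_ok E0 E1 g" using w(2) wg by simp
  have tgE: "tg g \<in> E0" using g by (cases g) (auto simp: gen_ok_def rE0' sE0')
  have cg: "cng E0 E1 r s (mon [g] :: _ \<Rightarrow>\<^sub>0 'r) (mon [g, P (tg g)])"
  proof (cases g)
    case (P v)
    then have v: "v \<in> E0" using g by (simp add: gen_ok_def)
    show ?thesis unfolding P tg.simps by (rule cng_sym[OF R_PP[OF v]])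
  next
    case (S e)
    then have e: "e \<in> E1" using g by (simp add: gen_ok_def)
    show ?thesis unfolding S tg.simps by (rule cng_sym[OF R_SP[OF e]])
  next
    case (SS e)
    then have e: "e \<in> E1" using g by (simp add: gen_ok_def)
    show ?thesis unfolding SS tg.simps by (rule cng_sym[OF R_SSP[OF e]])
  qed
  have c: "cng E0 E1 r s (mon w :: _ \<Rightarrow>\<^sub>0 'r) (mon (w @ [P (tg g)]))"
    by (rule cng_ctx[OF cg, of w' "[]"]) (simp_all add: wg)
  have "JJ (fmul (mon w) (pv (tg g)) :: _ \<Rightarrow>\<^sub>0 'r)"
    by (rule J_left_word) (use w all tgE in auto)
  then have "JJ (mon (w @ [P (tg g)]) :: _ \<Rightarrow>\<^sub>0 'r)" by (simp add: pv_def mon_append)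
  then show ?thesis by (rule J_cong[OF c])
qed

lemma if_dir:
  assumes "SigmaH E0 E1 r s V = E0"
  shows "is_full TYPE('r::comm_ring_1) E0 E1 r s V"
  unfolding is_full_def
proof
  fix x :: "_ \<Rightarrow>\<^sub>0 'r" assume x: "x \<in> free_alg E0 E1"
  have all: "\<forall>b\<in>E0. JJ (pv b :: _ \<Rightarrow>\<^sub>0 'r)" using K_SigmaH unfolding assms by blast
  have "JJ (fsmult (Poly_Mapping.lookup x w) (mon w)) " if "w \<in> Poly_Mapping.keys x" for w
    using x that by (intro J_fsmult J_word[OF all]) (auto simp: free_alg_def)
  then have "JJ (\<Sum>w\<in>Poly_Mapping.keys x. Poly_Mapping.single w (Poly_Mapping.lookup x w))"
    by (intro J_sum) (simp add: fsmult_mon)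
  then have "JJ x" by (simp only: pm_expand[symmetric])
  then show "\<exists>y\<in>MstarM E0 E1 r s V. x - y \<in> lp_ideal E0 E1 r s" unfolding JJ_def cng_def .
qed

end

theorem lemma3p2:
  fixes E0 :: "'v set" and E1 :: "'e set" and r s :: "'e \<Rightarrow> 'v" and V :: "'v set"
  assumes "countable E0" and "countable E1"
    and "r ` E1 \<subseteq> E0" and "s ` E1 \<subseteq> E0"
    and "V \<subseteq> E0"
  shows "is_full TYPE('r::comm_ring_1) E0 E1 r s V \<longleftrightarrow> SigmaH E0 E1 r s V = E0"
proof
  assume "is_full TYPE('r::comm_ring_1) E0 E1 r s V"
  then show "SigmaH E0 E1 r s V = E0" by (rule only_if_dir[OF assms(3-5)])
next
  assume h: "SigmaH E0 E1 r s V = E0"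
  have "gctx E0 E1 r s V" unfolding gctx_def using assms(3-5) by blast
  then show "is_full TYPE('r::comm_ring_1) E0 E1 r s V" using h by (rule gctx.if_dir)
qed


end
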